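(* Consider a common-payoff finite-horizon partially observable stochastic game with finite action sets, and let $\pi^t$ be a joint policy that assigns positive probability to every action at every decision point. For a stepsize $\eta > 0$, define the joint policy $\pi^{t+1}$ by performing a mirror descent (hedge) update simultaneously at every decision point of every player with action-value feedback: for each player $i$ and each decision point $h_i$ reached with positive probability under $\pi^t$, $$\pi^{t+1}_i(h_i) = \arg\max_{\bar{\pi}' \in \Delta(\mathbb{A}_i)} \langle \bar{\pi}', q_i^{\pi^t}(h_i)\rangle - \tfrac{1}{\eta}\mathrm{KL}(\bar{\pi}', \pi_i^t(h_i)), \quad\text{i.e.}\quad \pi^{t+1}_i(h_i)(a) \propto \pi^t_i(h_i)(a)\, e^{\eta\, q_i^{\pi^t}(h_i, a)}.$$ Then for every sufficiently small stepsize $\eta > 0$, $\mathcal{J}(\pi^{t+1}) \geq \mathcal{J}(\pi^t)$, and this inequality is strict if $\pi^{t+1} \neq \pi^t$.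
   Context: A finite-horizon partially observable stochastic game (POSG) consists of finite sets of Markov states $\mathbb{S}$, per-player action sets $\mathbb{A}_i$ and observation sets $\mathbb{O}_i$, joint actions $\mathbb{A} = \times_i \mathbb{A}_i$, reward functions $\mathcal{R}_i \colon \mathbb{S}\times\mathbb{A}\to\mathbb{R}$, a transition function $\mathcal{T}\colon \mathbb{S}\times\mathbb{A}\to\Delta(\mathbb{S})$ and observation functions $\mathcal{O}_i \colon \mathbb{S}\times\mathbb{A}\to\mathbb{O}_i$. Player $i$'s decision points are $h_i \in \mathbb{H}_i = \bigcup_t (\mathbb{O}_i\times\mathbb{A}_i)^t\times\mathbb{O}_i$; histories are $h \in \mathbb{H} = \times_i \mathbb{H}_i$. A policy for player $i$ is a map $\pi_i\colon \mathbb{H}_i \to \Delta(\mathbb{A}_i)$, and a joint policy is $\pi = (\pi_i)_i$; $\mathcal{P}_\pi$, $\mathbb{E}_\pi$ denote probabilities/expectations induced by $\pi$. The expected return of player $i$ is $\mathcal{J}_i(\pi) = \mathbb{E}_\pi[\sum_t \mathcal{R}_i(S^t, A^t)]$; the game is common-payoff if all players' returns coincide, and then $\mathcal{J}$ denotes this common expected return. For a history $h^t$ at time $t$, $G^{\geq t} = \sum_{t'\geq t}\mathcal{R}_i(S^{t'},A^{t'})$, $v_i^\pi(h^t) = \mathbb{E}_\pi[G^{\geq t}\mid h^t]$, $q_i^\pi(h^t,a_i) = \mathbb{E}_\pi[\mathcal{R}_i(S^t,A^t) + v_i^\pi(H^{t+1})\mid h^t, a_i]$, and the action value at a decision point is $q_i^\pi(h_i^t,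 a_i) = \mathbb{E}_\pi[q_i^\pi(H^t,a_i)\mid h_i^t]$, with $q_i^\pi(h_i)$ the vector $(q_i^\pi(h_i,a))_{a\in\mathbb{A}_i}$. $\mathrm{KL}$ is the Kullback–Leibler divergence. (At decision points reached with probability zero the update does not affect $\mathcal{J}$.) *)

theory Defs
  imports "HOL-Probability.Probability"
begin

text \<open>Dynamics: S^0 ~ init; A^t ~ product of the players' policies at their decision points;
  S^(t+1) ~ trans S^t A^t.  Player i observes obs0 i S^0 at time 0 and
  obs i S^(t+1) A^t at time t+1.  Rewards rew i S^t A^t for t < horizon.\<close>

record ('s, 'i, 'a, 'o) posg =
  init :: "'s pmf"
  trans :: "'s \<Rightarrow> ('i \<Rightarrow> 'a) \<Rightarrow> 's pmf"
  obs0 :: "'i \<Rightarrow> 's \<Rightarrow> 'o"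
  obs :: "'i \<Rightarrow> 's \<Rightarrow> ('i \<Rightarrow> 'a) \<Rightarrow> 'o"
  rew :: "'i \<Rightarrow> 's \<Rightarrow> ('i \<Rightarrow> 'a) \<Rightarrow> real"
  acts :: "'i \<Rightarrow> 'a set"
  horizon :: nat

definition wf_posg :: "('s::finite, 'i::finite, 'a, 'o::finite) posg \<Rightarrow> bool" where
  "wf_posg G \<longleftrightarrow> (\<forall>i. finite (acts G i) \<and> acts G i \<noteq> {})"

text \<open>Decision point of a player: ((o^0,a^0),...,(o^(t-1),a^(t-1))), o^t).\<close>
type_synonym ('o, 'a) dpoint = "('o \<times> 'a) list \<times> 'o"

text \<open>Observation of player i at time k, given states ss = [s^0..s^t] and joint actions
  acs = [a^0..a^(t-1)].\<close>
definition obs_at :: "('s, 'i, 'a, 'o) posg \<Rightarrow> 'i \<Rightarrow> 's list \<Rightarrow> ('i \<Rightarrow> 'a) list \<Rightarrow> nat \<Rightarrow> 'o" where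
  "obs_at G i ss acs k = (if k = 0 then obs0 G i (ss ! 0) else obs G i (ss ! k) (acs ! (k - 1)))"

definition hist :: "('s, 'i, 'a, 'o) posg \<Rightarrow> 'i \<Rightarrow> ('s \<times> ('i \<Rightarrow> 'a)) list \<Rightarrow> 's \<Rightarrow> ('o, 'a) dpoint" where
  "hist G i past s =
    (let ss = map fst past @ [s]; acs = map snd past; t = length past
     in (zip (map (obs_at G i ss acs) [0..<t]) (map (\<lambda>a. a i) acs), obs_at G i ss acs t))"

type_synonym ('i, 'o, 'a) policy = "'i \<Rightarrow> ('o, 'a) dpoint \<Rightarrow> 'a pmf"

primrec gen :: "('s, 'i::finite, 'a, 'o) posg \<Rightarrow> ('i, 'o, 'a) policy \<Rightarrow> nat
    \<Rightarrow> ('s \<times> ('i \<Rightarrow> 'a)) list \<Rightarrow> 's \<Rightarrow> ('s \<times> ('i \<Rightarrow> 'a)) list pmf" where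
  "gen G \<pi> 0 past s = return_pmf []"
| "gen G \<pi> (Suc n) past s =
     bind_pmf (Pi_pmf UNIV undefined (\<lambda>i. \<pi> i (hist G i past s)))
       (\<lambda>a. bind_pmf (trans G s a)
          (\<lambda>s'. map_pmf (\<lambda>rest. (s, a) # rest) (gen G \<pi> n (past @ [(s, a)]) s')))"

definition traj :: "('s, 'i::finite, 'a, 'o) posg \<Rightarrow> ('i, 'o, 'a) policy \<Rightarrow> ('s \<times> ('i \<Rightarrow> 'a)) list pmf" where
  "traj G \<pi> = bind_pmf (init G) (\<lambda>s. gen G \<pi> (horizon G) [] s)"

definition Hi :: "('s, 'i, 'a, 'o) posg \<Rightarrow> 'i \<Rightarrow> nat \<Rightarrow> ('s \<times> ('i \<Rightarrow> 'a)) list \<Rightarrow> ('o, 'a) dpoint" where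
  "Hi G i t tr = hist G i (take t tr) (fst (tr ! t))"

definition Hj :: "('s, 'i, 'a, 'o) posg \<Rightarrow> nat \<Rightarrow> ('s \<times> ('i \<Rightarrow> 'a)) list \<Rightarrow> 'i \<Rightarrow> ('o, 'a) dpoint" where
  "Hj G t tr = (\<lambda>i. Hi G i t tr)"

definition ret :: "('s, 'i, 'a, 'o) posg \<Rightarrow> 'i \<Rightarrow> ('s \<times> ('i \<Rightarrow> 'a)) list \<Rightarrow> real" where
  "ret G i tr = sum_list (map (\<lambda>(s, a). rew G i s a) tr)"

definition J :: "('s, 'i::finite, 'a, 'o) posg \<Rightarrow> 'i \<Rightarrow> ('i, 'o, 'a) policy \<Rightarrow> real" where
  "J G i \<pi> = measure_pmf.expectation (traj G \<pi>) (ret G i)"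

definition Gge :: "('s, 'i, 'a, 'o) posg \<Rightarrow> 'i \<Rightarrow> nat \<Rightarrow> ('s \<times> ('i \<Rightarrow> 'a)) list \<Rightarrow> real" where
  "Gge G i t tr = (\<Sum>k\<in>{t..<length tr}. rew G i (fst (tr ! k)) (snd (tr ! k)))"

definition cexp :: "'x pmf \<Rightarrow> ('x \<Rightarrow> bool) \<Rightarrow> ('x \<Rightarrow> real) \<Rightarrow> real" where
  "cexp p P f = measure_pmf.expectation p (\<lambda>x. if P x then f x else 0) / measure_pmf.prob p {x. P x}"

definition vval :: "('s, 'i::finite, 'a, 'o) posg \<Rightarrow> 'i \<Rightarrow> ('i, 'o, 'a) policy \<Rightarrow> nat
    \<Rightarrow> ('i \<Rightarrow> ('o, 'a) dpoint) \<Rightarrow> real" where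
  "vval G i \<pi> t h = cexp (traj G \<pi>) (\<lambda>tr. Hj G t tr = h) (Gge G i t)"

definition qjoint :: "('s, 'i::finite, 'a, 'o) posg \<Rightarrow> 'i \<Rightarrow> ('i, 'o, 'a) policy \<Rightarrow> nat
    \<Rightarrow> ('i \<Rightarrow> ('o, 'a) dpoint) \<Rightarrow> 'a \<Rightarrow> real" where
  "qjoint G i \<pi> t h a = cexp (traj G \<pi>) (\<lambda>tr. Hj G t tr = h \<and> snd (tr ! t) i = a)
      (\<lambda>tr. rew G i (fst (tr ! t)) (snd (tr ! t)) + vval G i \<pi> (Suc t) (Hj G (Suc t) tr))"

definition qdp :: "('s, 'i::finite, 'a, 'o) posg \<Rightarrow> 'i \<Rightarrow> ('i, 'o, 'a) policy
    \<Rightarrow> ('o, 'a) dpoint \<Rightarrow> 'a \<Rightarrow> real" where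
  "qdp G i \<pi> h a = (let t = length (fst h) in
      cexp (traj G \<pi>) (\<lambda>tr. Hi G i t tr = h) (\<lambda>tr. qjoint G i \<pi> t (Hj G t tr) a))"

definition reached :: "('s, 'i::finite, 'a, 'o) posg \<Rightarrow> ('i, 'o, 'a) policy \<Rightarrow> 'i \<Rightarrow> ('o, 'a) dpoint \<Rightarrow> bool" where
  "reached G \<pi> i h \<longleftrightarrow> length (fst h) < horizon G \<and>
     measure_pmf.prob (traj G \<pi>) {tr. Hi G i (length (fst h)) tr = h} > 0"

definition valid_policy :: "('s, 'i, 'a, 'o) posg \<Rightarrow> ('i, 'o, 'a) policy \<Rightarrow> bool" where
  "valid_policy G \<pi> \<longleftrightarrow> (\<forall>i h. set_pmf (\<pi> i h) \<subseteq> acts G i)"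

definition fully_mixed :: "('s, 'i, 'a, 'o) posg \<Rightarrow> ('i, 'o, 'a) policy \<Rightarrow> bool" where
  "fully_mixed G \<pi> \<longleftrightarrow> (\<forall>i h. set (map snd (fst h)) \<subseteq> acts G i \<longrightarrow> (\<forall>a\<in>acts G i. pmf (\<pi> i h) a > 0))"

definition common_payoff :: "('s, 'i::finite, 'a, 'o) posg \<Rightarrow> bool" where
  "common_payoff G \<longleftrightarrow> (\<forall>\<pi>. valid_policy G \<pi> \<longrightarrow> (\<forall>i j. J G i \<pi> = J G j \<pi>))"

definition hedge_update :: "('s, 'i::finite, 'a, 'o) posg \<Rightarrow> real \<Rightarrow> ('i, 'o, 'a) policy
    \<Rightarrow> ('i, 'o, 'a) policy \<Rightarrow> bool" where
  "hedge_update G \<eta> \<pi> \<pi>' \<longleftrightarrow> (\<forall>i h.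
     (if reached G \<pi> i h then
        (\<forall>a. pmf (\<pi>' i h) a =
              pmf (\<pi> i h) a * exp (\<eta> * qdp G i \<pi> h a) /
              (\<Sum>b\<in>acts G i. pmf (\<pi> i h) b * exp (\<eta> * qdp G i \<pi> h b)))
      else \<pi>' i h = \<pi> i h))"

end

theory Submission
  imports Defs
begin

lemma exp_sum:
  fixes p :: "'x pmf" and f :: "'x \<Rightarrow> real"
  assumes "finite S" "set_pmf p \<subseteq> S"
  shows "measure_pmf.expectation p f = (\<Sum>x\<in>S. pmf p x * f x)"
  using assms by (subst integral_measure_pmf_real[where A=S]) (auto simp: mult.commute)

lemma prob_sum:
  fixes p :: "'x pmf"
  assumes "finite S" "set_pmf p \<subseteq> S"
  shows "measure_pmf.prob p {x. P x} = (\<Sum>x\<in>S. pmf p x * (if P x then 1 else 0))"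
proof -
  have "measure_pmf.prob p {x. P x} = measure_pmf.prob p ({x. P x} \<inter> S)"
    using measure_Int_set_pmf[of p "{x. P x}"] measure_Int_set_pmf[of p "{x. P x} \<inter> S"] assms(2)
    by (metis Int_assoc inf.absorb_iff2)
  also have "\<dots> = sum (pmf p) ({x. P x} \<inter> S)"
    using assms by (simp add: measure_measure_pmf_finite)
  also have "\<dots> = (\<Sum>x\<in>S. pmf p x * (if P x then 1 else 0))"
    using assms(1) by (simp add: sum.inter_restrict Int_commute if_distrib cong: if_cong)
  finally show ?thesis .
qed

lemma exp_bind:
  fixes f :: "'y \<Rightarrow> real"
  assumes "finite A" "finite B" "set_pmf M \<subseteq> A" "\<And>y. y \<in> set_pmf M \<Longrightarrow> set_pmf (N y) \<subseteq> B"
  shows "measure_pmf.expectation (bind_pmf M N) f = measure_pmf.expectation M (\<lambda>y. measure_pmf.expectation (N y) f)"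
proof -
  have sb: "set_pmf (bind_pmf M N) \<subseteq> B" using assms(3,4) by auto
  have "measure_pmf.expectation (bind_pmf M N) f = (\<Sum>x\<in>B. pmf (bind_pmf M N) x * f x)"
    by (rule exp_sum[OF assms(2) sb])
  also have "\<dots> = (\<Sum>x\<in>B. (\<Sum>y\<in>A. pmf M y * pmf (N y) x) * f x)"
    by (intro sum.cong refl, subst pmf_bind, subst exp_sum[OF assms(1,3)]) simp
  also have "\<dots> = (\<Sum>y\<in>A. pmf M y * (\<Sum>x\<in>B. pmf (N y) x * f x))"
    by (simp add: sum_distrib_left sum_distrib_right mult_ac sum.swap[of _ B])
  also have "\<dots> = (\<Sum>y\<in>A. pmf M y * measure_pmf.expectation (N y) f)"
  proof (intro sum.cong refl)
    fix y assume "y \<in> A"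
    show "pmf M y * (\<Sum>x\<in>B. pmf (N y) x * f x) = pmf M y * measure_pmf.expectation (N y) f"
    proof (cases "y \<in> set_pmf M")
      case True thus ?thesis using exp_sum[OF assms(2) assms(4)[OF True]] by simp
    next
      case False thus ?thesis by (simp add: set_pmf_eq)
    qed
  qed
  also have "\<dots> = measure_pmf.expectation M (\<lambda>y. measure_pmf.expectation (N y) f)"
    by (rule exp_sum[symmetric, OF assms(1,3)])
  finally show ?thesis .
qed

definition AS :: "('s, 'i, 'a, 'o) posg \<Rightarrow> ('i \<Rightarrow> 'a) set" where
  "AS G = {f. \<forall>i. f i \<in> acts G i}"

definition TrS :: "('s, 'i, 'a, 'o) posg \<Rightarrow> nat \<Rightarrow> ('s \<times> ('i \<Rightarrow> 'a)) list set" where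
  "TrS G n = {r. length r = n \<and> (\<forall>x\<in>set r. snd x \<in> AS G)}"

lemma finite_AS:
  fixes G :: "('s::finite, 'i::finite, 'a, 'o::finite) posg"
  assumes "wf_posg G" shows "finite (AS G)"
proof -
  have "AS G = Pi\<^sub>E UNIV (acts G)" by (auto simp: AS_def PiE_def extensional_def Pi_def)
  thus ?thesis using assms by (simp add: wf_posg_def finite_PiE)
qed

lemma finite_TrS:
  fixes G :: "('s::finite, 'i::finite, 'a, 'o::finite) posg"
  assumes "wf_posg G" shows "finite (TrS G n)"
proof -
  have "TrS G n \<subseteq> {xs. set xs \<subseteq> UNIV \<times> AS G \<and> length xs = n}"
    by (auto simp: TrS_def)
  moreover have "finite ((UNIV::'s set) \<times> AS G)" using finite_AS[OF assms] by (intro finite_cartesian_product) auto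
  ultimately show ?thesis using finite_lists_length_eq[of "(UNIV::'s set) \<times> AS G" n]
    by (meson finite_subset)
qed

lemma set_Pi_AS:
  fixes G :: "('s::finite, 'i::finite, 'a, 'o::finite) posg"
  assumes "valid_policy G \<pi>"
  shows "set_pmf (Pi_pmf UNIV undefined (\<lambda>i. \<pi> i (H i))) \<subseteq> AS G"
proof
  fix x assume x: "x \<in> set_pmf (Pi_pmf UNIV undefined (\<lambda>i. \<pi> i (H i)))"
  have "x i \<in> set_pmf (\<pi> i (H i))" for i
    using set_Pi_pmf_subset'[of UNIV undefined "\<lambda>i. \<pi> i (H i)"] x by (auto simp: PiE_dflt_def)
  hence "\<forall>i. x i \<in> acts G i" using assms unfolding valid_policy_def by (metis prod.collapse subsetD)
  thus "x \<in> AS G" by (simp add: AS_def)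
qed

lemma set_gen:
  fixes G :: "('s::finite, 'i::finite, 'a, 'o::finite) posg"
  assumes "valid_policy G \<pi>"
  shows "set_pmf (gen G \<pi> n past s) \<subseteq> TrS G n"
proof (induction n arbitrary: past s)
  case 0 thus ?case by (simp add: TrS_def)
next
  case (Suc n)
  show ?case using Suc set_Pi_AS[OF assms, of "\<lambda>i. hist G i past s"]
    by (fastforce simp: TrS_def)
qed

lemma set_traj:
  fixes G :: "('s::finite, 'i::finite, 'a, 'o::finite) posg"
  assumes "valid_policy G \<pi>"
  shows "set_pmf (traj G \<pi>) \<subseteq> TrS G (horizon G)"
  using set_gen[OF assms] by (auto simp: traj_def)

lemma pmf_map_Cons: "pmf (map_pmf ((#) y) g) (x # xs) = (if x = y then pmf g xs else 0)"
proof (cases "x = y")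
  case True
  have "inj ((#) y)" by (simp add: inj_def)
  thus ?thesis using True pmf_map_inj'[of "(#) y" g xs] by simp
next
  case False thus ?thesis by (subst pmf_map_outside) auto
qed

lemma pmf_map_Cons_Nil: "pmf (map_pmf ((#) y) g) [] = 0"
  by (subst pmf_map_outside) auto

lemma pmf_gen_Suc_Nil: "pmf (gen G \<pi> (Suc n) past s) [] = 0"
  by (simp add: pmf_bind pmf_map_Cons_Nil)

lemma pmf_gen_Suc_Cons:
  fixes G :: "('s::finite, 'i::finite, 'a, 'o::finite) posg"
  shows "pmf (gen G \<pi> (Suc n) past s) ((s0,a0)#rest) =
    (if s0 = s then (\<Prod>i\<in>UNIV. pmf (\<pi> i (hist G i past s)) (a0 i)) *
       (\<Sum>s'\<in>UNIV. pmf (trans G s a0) s' * pmf (gen G \<pi> n (past @ [(s,a0)]) s') rest) else 0)"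
proof -
  let ?P = "Pi_pmf UNIV undefined (\<lambda>i. \<pi> i (hist G i past s))"
  let ?f = "\<lambda>a. (\<integral>s'. pmf (map_pmf ((#) (s, a)) (gen G \<pi> n (past @ [(s, a)]) s')) ((s0, a0) # rest) \<partial>measure_pmf (trans G s a))"
  have "pmf (gen G \<pi> (Suc n) past s) ((s0,a0)#rest) = (\<integral>a. ?f a \<partial>measure_pmf ?P)"
    by (simp add: pmf_bind)
  also have "\<dots> = (\<Sum>a\<in>{a0}. ?f a * pmf ?P a)"
  proof (rule integral_measure_pmf_real)
    fix a assume "?f a \<noteq> 0" thus "a \<in> {a0}" by (cases "a = a0") (auto simp: pmf_map_Cons)
  qed simp
  also have "\<dots> = ?f a0 * pmf ?P a0" by simp
  also have "?f a0 = (if s0 = s then (\<Sum>s'\<in>UNIV. pmf (trans G s a0) s' * pmf (gen G \<pi> n (past @ [(s,a0)]) s') rest) else 0)"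
    by (subst integral_measure_pmf_real[where A=UNIV]) (auto simp: pmf_map_Cons mult.commute)
  also have "pmf ?P a0 = (\<Prod>i\<in>UNIV. pmf (\<pi> i (hist G i past s)) (a0 i))"
    by (rule pmf_Pi') auto
  finally show ?thesis by simp
qed

lemma pmf_traj:
  fixes G :: "('s::finite, 'i::finite, 'a, 'o::finite) posg"
  shows "pmf (traj G \<pi>) tr = (\<Sum>s\<in>UNIV. pmf (init G) s * pmf (gen G \<pi> (horizon G) [] s) tr)"
  unfolding traj_def pmf_bind
  by (subst integral_measure_pmf_real[where A=UNIV]) (auto simp: mult.commute)


lemma deriv_gen:
  fixes G :: "('s::finite, 'i::finite, 'a, 'o::finite) posg"
    and PP :: "real \<Rightarrow> ('i, 'o, 'a) policy"
  assumes rho: "\<And>\<eta> i h a. pmf (PP \<eta> i h) a = pmf (\<pi> i h) a * \<rho> \<eta> i h a"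
    and rho0: "\<And>i h a. \<rho> 0 i h a = 1"
    and drho: "\<And>i h a. ((\<lambda>\<eta>. \<rho> \<eta> i h a) has_real_derivative d i h a) (at 0)"
  shows "((\<lambda>\<eta>. pmf (gen G (PP \<eta>) n past s) r) has_real_derivative
     (pmf (gen G \<pi> n past s) r * (\<Sum>k<n. \<Sum>i\<in>UNIV. d i (hist G i (past @ take k r) (fst (r!k))) (snd (r!k) i)))) (at 0)"
proof (induction n arbitrary: past s r)
  case 0
  show ?case by (simp add: DERIV_const)
next
  case (Suc n)
  have P0: "PP 0 = \<pi>" using rho rho0 by (intro ext pmf_eqI) simp
  show ?case
  proof (cases r)
    case Nil thus ?thesis by (simp del: gen.simps add: pmf_gen_Suc_Nil DERIV_const)
  next
    case (Cons x r')
    obtain s0 a0 where x: "x = (s0,a0)" by (cases x)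
    show ?thesis
    proof (cases "s0 = s")
      case False thus ?thesis using Cons x by (simp del: gen.simps add: pmf_gen_Suc_Cons DERIV_const)
    next
      case True
      define h where "h i = hist G i past s" for i
      define c where "c i = pmf (\<pi> i (h i)) (a0 i)" for i
      define g where "g \<eta> s' = pmf (gen G (PP \<eta>) n (past @ [(s,a0)]) s') r'" for \<eta> s'
      define S' where "S' = (\<Sum>k<n. \<Sum>i\<in>UNIV. d i (hist G i ((past @ [(s,a0)]) @ take k r') (fst (r'!k))) (snd (r'!k) i))"
      define tp where "tp s' = pmf (trans G s a0) s'" for s'
      have eq: "(\<lambda>\<eta>. pmf (gen G (PP \<eta>) (Suc n) past s) r) =
         (\<lambda>\<eta>. (\<Prod>i\<in>UNIV. c i * \<rho> \<eta> i (h i) (a0 i)) * (\<Sum>s'\<in>UNIV. tp s' * g \<eta> s'))"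
        using Cons x True by (simp del: gen.simps add: pmf_gen_Suc_Cons rho c_def h_def g_def tp_def)
      have dP: "((\<lambda>\<eta>. \<Prod>i\<in>UNIV. c i * \<rho> \<eta> i (h i) (a0 i)) has_real_derivative
          (\<Sum>i\<in>UNIV. c i * d i (h i) (a0 i) * (\<Prod>j\<in>UNIV-{i}. c j * \<rho> 0 j (h j) (a0 j)))) (at 0)"
        by (rule has_field_derivative_prod) (intro DERIV_cmult drho)
      have IH': "((\<lambda>\<eta>. g \<eta> s') has_real_derivative g 0 s' * S') (at 0)" for s'
        unfolding g_def S'_def P0 by (rule Suc.IH)
      have dG: "((\<lambda>\<eta>. \<Sum>s'\<in>UNIV. tp s' * g \<eta> s') has_real_derivative
          (\<Sum>s'\<in>UNIV. tp s' * (g 0 s' * S'))) (at 0)"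
        by (intro DERIV_sum DERIV_cmult IH')
      have D: "((\<lambda>\<eta>. (\<Prod>i\<in>UNIV. c i * \<rho> \<eta> i (h i) (a0 i)) * (\<Sum>s'\<in>UNIV. tp s' * g \<eta> s')) has_real_derivative
          (\<Sum>i\<in>UNIV. c i * d i (h i) (a0 i) * (\<Prod>j\<in>UNIV-{i}. c j * \<rho> 0 j (h j) (a0 j))) * (\<Sum>s'\<in>UNIV. tp s' * g 0 s')
          + (\<Sum>s'\<in>UNIV. tp s' * (g 0 s' * S')) * (\<Prod>i\<in>UNIV. c i * \<rho> 0 i (h i) (a0 i))) (at 0)"
        by (rule DERIV_mult[OF dP dG])
      have rem: "c i * (\<Prod>j\<in>UNIV-{i}. c j) = (\<Prod>j\<in>UNIV. c j)" for i
        by (simp add: prod.remove)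
      have e1: "(\<Sum>i\<in>UNIV. c i * d i (h i) (a0 i) * (\<Prod>j\<in>UNIV-{i}. c j * \<rho> 0 j (h j) (a0 j)))
          = (\<Prod>i\<in>UNIV. c i) * (\<Sum>i\<in>UNIV. d i (h i) (a0 i))"
      proof -
        have "(\<Sum>i\<in>UNIV. c i * d i (h i) (a0 i) * (\<Prod>j\<in>UNIV-{i}. c j * \<rho> 0 j (h j) (a0 j)))
           = (\<Sum>i\<in>UNIV. d i (h i) (a0 i) * (c i * (\<Prod>j\<in>UNIV-{i}. c j)))"
          by (simp add: rho0 mult_ac)
        also have "\<dots> = (\<Sum>i\<in>UNIV. d i (h i) (a0 i) * (\<Prod>j\<in>UNIV. c j))" by (simp only: rem)
        finally show ?thesis by (simp add: sum_distrib_left mult_ac)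
      qed
      have e2: "(\<Sum>s'\<in>UNIV. tp s' * (g 0 s' * S')) = (\<Sum>s'\<in>UNIV. tp s' * g 0 s') * S'"
        by (simp add: sum_distrib_left sum_distrib_right mult_ac)
      have e3: "pmf (gen G \<pi> (Suc n) past s) r = (\<Prod>i\<in>UNIV. c i) * (\<Sum>s'\<in>UNIV. tp s' * g 0 s')"
        using Cons x True by (simp del: gen.simps add: pmf_gen_Suc_Cons c_def h_def g_def P0 tp_def)
      have e4: "(\<Sum>k<Suc n. \<Sum>i\<in>UNIV. d i (hist G i (past @ take k r) (fst (r!k))) (snd (r!k) i))
          = (\<Sum>i\<in>UNIV. d i (h i) (a0 i)) + S'"
        using Cons x True unfolding sum.lessThan_Suc_shift by (simp add: h_def S'_def)
      have val: "(\<Sum>i\<in>UNIV. c i * d i (h i) (a0 i) * (\<Prod>j\<in>UNIV-{i}. c j * \<rho> 0 j (h j) (a0 j))) * (\<Sum>s'\<in>UNIV. tp s' * g 0 s')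
          + (\<Sum>s'\<in>UNIV. tp s' * (g 0 s' * S')) * (\<Prod>i\<in>UNIV. c i * \<rho> 0 i (h i) (a0 i))
          = pmf (gen G \<pi> (Suc n) past s) r * (\<Sum>k<Suc n. \<Sum>i\<in>UNIV. d i (hist G i (past @ take k r) (fst (r!k))) (snd (r!k) i))"
        unfolding e1 e2 e3 e4 by (simp add: rho0 algebra_simps)
      show ?thesis unfolding eq using D val by simp
    qed
  qed
qed

lemma deriv_J:
  fixes G :: "('s::finite, 'i::finite, 'a, 'o::finite) posg"
    and PP :: "real \<Rightarrow> ('i, 'o, 'a) policy"
  assumes wf: "wf_posg G" and vP: "\<And>\<eta>. valid_policy G (PP \<eta>)"
    and rho: "\<And>\<eta> i h a. pmf (PP \<eta> i h) a = pmf (\<pi> i h) a * \<rho> \<eta> i h a"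
    and rho0: "\<And>i h a. \<rho> 0 i h a = 1"
    and drho: "\<And>i h a. ((\<lambda>\<eta>. \<rho> \<eta> i h a) has_real_derivative d i h a) (at 0)"
  shows "((\<lambda>\<eta>. J G k (PP \<eta>)) has_real_derivative
     (\<Sum>tr\<in>TrS G (horizon G). pmf (traj G \<pi>) tr * ret G k tr *
        (\<Sum>t<horizon G. \<Sum>i\<in>UNIV. d i (Hi G i t tr) (snd (tr!t) i)))) (at 0)"
proof -
  have eqJ: "(\<lambda>\<eta>. J G k (PP \<eta>)) = (\<lambda>\<eta>. \<Sum>tr\<in>TrS G (horizon G). ret G k tr *
      (\<Sum>s\<in>UNIV. pmf (init G) s * pmf (gen G (PP \<eta>) (horizon G) [] s) tr))"
    by (rule ext) (simp add: J_def exp_sum[OF finite_TrS[OF wf] set_traj[OF vP]] pmf_traj mult.commute)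
  have D: "((\<lambda>\<eta>. \<Sum>tr\<in>TrS G (horizon G). ret G k tr *
      (\<Sum>s\<in>UNIV. pmf (init G) s * pmf (gen G (PP \<eta>) (horizon G) [] s) tr)) has_real_derivative
      (\<Sum>tr\<in>TrS G (horizon G). ret G k tr *
      (\<Sum>s\<in>UNIV. pmf (init G) s * (pmf (gen G \<pi> (horizon G) [] s) tr *
         (\<Sum>k<horizon G. \<Sum>i\<in>UNIV. d i (hist G i ([] @ take k tr) (fst (tr!k))) (snd (tr!k) i)))))) (at 0)"
    by (intro DERIV_sum DERIV_cmult deriv_gen[OF rho rho0 drho])
  show ?thesis unfolding eqJ using D
    by (simp add: pmf_traj Hi_def sum_distrib_right mult_ac)
qed


definition otr :: "('s,'i,'a,'o) posg \<Rightarrow> 'i \<Rightarrow> ('s \<times> ('i \<Rightarrow> 'a)) list \<Rightarrow> nat \<Rightarrow> 'o" where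
  "otr G i tr k = (if k = 0 then obs0 G i (fst (tr!0)) else obs G i (fst (tr!k)) (snd (tr!(k-1))))"

lemma ss_nth: "k \<le> t \<Longrightarrow> t \<le> length tr \<Longrightarrow> (map fst (take t tr) @ [fst (tr!t)]) ! k = fst (tr!k)"
  by (cases "k < t") (auto simp: nth_append)

lemma obs_at_tr: "k \<le> t \<Longrightarrow> t \<le> length tr \<Longrightarrow>
   obs_at G i (map fst (take t tr) @ [fst (tr!t)]) (map snd (take t tr)) k = otr G i tr k"
  by (auto simp: obs_at_def otr_def ss_nth)

lemma Hi_explicit: "t \<le> length tr \<Longrightarrow>
   Hi G i t tr = (zip (map (otr G i tr) [0..<t]) (map (\<lambda>k. snd (tr!k) i) [0..<t]), otr G i tr t)"
proof -
  assume t: "t \<le> length tr"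
  have l: "length (take t tr) = t" using t by simp
  have m1: "map (obs_at G i (map fst (take t tr) @ [fst (tr!t)]) (map snd (take t tr))) [0..<t] = map (otr G i tr) [0..<t]"
    using t by (intro map_cong refl) (simp add: obs_at_tr)
  have m2: "map (\<lambda>a. a i) (map snd (take t tr)) = map (\<lambda>k. snd (tr!k) i) [0..<t]"
    using t by (intro nth_equalityI) auto
  show ?thesis unfolding Hi_def hist_def Let_def l m1 m2 using obs_at_tr[OF order.refl t] by simp
qed

definition bk :: "('o,'a) dpoint \<Rightarrow> ('o,'a) dpoint" where "bk hh = (butlast (fst hh), fst (last (fst hh)))"
definition lact :: "('o,'a) dpoint \<Rightarrow> 'a" where "lact hh = snd (last (fst hh))"

lemma Hi_back: "Suc t \<le> length tr \<Longrightarrow> bk (Hi G i (Suc t) tr) = Hi G i t tr \<and> lact (Hi G i (Suc t) tr) = snd (tr!t) i"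
  using Hi_explicit[of "Suc t" tr G i] Hi_explicit[of t tr G i]
  by (simp add: bk_def lact_def zip_append)

lemma Hi_len: "t \<le> length tr \<Longrightarrow> length (fst (Hi G i t tr)) = t"
  by (simp add: Hi_explicit)

lemma Hi_acts: "tr \<in> TrS G n \<Longrightarrow> t \<le> n \<Longrightarrow> set (map snd (fst (Hi G i t tr))) \<subseteq> acts G i"
proof
  fix x assume tr: "tr \<in> TrS G n" and t: "t \<le> n" and x: "x \<in> set (map snd (fst (Hi G i t tr)))"
  have len: "length tr = n" using tr by (simp add: TrS_def)
  from x obtain k where k: "k < t" "x = snd (tr!k) i" using t len by (auto simp: Hi_explicit)
  have "tr!k \<in> set tr" using k t len by simp
  thus "x \<in> acts G i" using tr k by (auto simp: TrS_def AS_def)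
qed

lemma len_gen:
  fixes G :: "('s::finite, 'i::finite, 'a, 'o::finite) posg"
  shows "valid_policy G \<pi> \<Longrightarrow> x \<in> set_pmf (gen G \<pi> n past s) \<Longrightarrow> length x = n"
  using set_gen[of G \<pi> n past s] by (auto simp: TrS_def)

lemma exp_gen_Suc:
  fixes G :: "('s::finite, 'i::finite, 'a, 'o::finite) posg" and f :: "('s \<times> ('i \<Rightarrow> 'a)) list \<Rightarrow> real"
  assumes wf: "wf_posg G" and vp: "valid_policy G \<pi>"
  shows "measure_pmf.expectation (gen G \<pi> (Suc n) past s) f =
    measure_pmf.expectation (Pi_pmf UNIV undefined (\<lambda>i. \<pi> i (hist G i past s)))
     (\<lambda>a. measure_pmf.expectation (trans G s a) (\<lambda>s'.
        measure_pmf.expectation (gen G \<pi> n (past@[(s,a)]) s') (\<lambda>r. f ((s,a)#r))))"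
proof -
  have sub: "set_pmf (trans G s a \<bind> (\<lambda>s'. map_pmf ((#) (s, a)) (gen G \<pi> n (past @ [(s, a)]) s'))) \<subseteq> TrS G (Suc n)"
    if "a \<in> set_pmf (Pi_pmf UNIV undefined (\<lambda>i. \<pi> i (hist G i past s)))" for a
    using that set_Pi_AS[OF vp, of "\<lambda>i. hist G i past s"] set_gen[OF vp, of n]
    by (fastforce simp: TrS_def)
  have "measure_pmf.expectation (gen G \<pi> (Suc n) past s) f =
    measure_pmf.expectation (Pi_pmf UNIV undefined (\<lambda>i. \<pi> i (hist G i past s)))
     (\<lambda>a. measure_pmf.expectation (trans G s a \<bind> (\<lambda>s'. map_pmf ((#) (s, a)) (gen G \<pi> n (past @ [(s, a)]) s'))) f)"
    unfolding gen.simps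
    by (rule exp_bind[OF finite_AS[OF wf] finite_TrS[OF wf] set_Pi_AS[OF vp]]) (rule sub)
  also have "\<dots> = measure_pmf.expectation (Pi_pmf UNIV undefined (\<lambda>i. \<pi> i (hist G i past s)))
     (\<lambda>a. measure_pmf.expectation (trans G s a) (\<lambda>s'.
        measure_pmf.expectation (gen G \<pi> n (past@[(s,a)]) s') (\<lambda>r. f ((s,a)#r))))"
  proof (intro Bochner_Integration.integral_cong refl)
    fix a assume "a \<in> space (measure_pmf (Pi_pmf UNIV undefined (\<lambda>i. \<pi> i (hist G i past s))))"
    have fin: "finite {r. length r = Suc n \<and> r \<in> (\<Union>s'. set_pmf (map_pmf ((#) (s, a)) (gen G \<pi> n (past @ [(s, a)]) s')))}"
    proof -
      have "finite (\<Union>s'. set_pmf (map_pmf ((#) (s, a)) (gen G \<pi> n (past @ [(s, a)]) s')))"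
      proof (rule finite_UN_I)
        fix s' show "finite (set_pmf (map_pmf ((#) (s, a)) (gen G \<pi> n (past @ [(s, a)]) s')))"
          using finite_TrS[OF wf, of n] set_gen[OF vp, of n "past @ [(s, a)]" s'] by (auto intro: finite_subset)
      qed simp
      thus ?thesis by (rule finite_subset[rotated]) auto
    qed
    show "measure_pmf.expectation (trans G s a \<bind> (\<lambda>s'. map_pmf ((#) (s, a)) (gen G \<pi> n (past @ [(s, a)]) s'))) f =
      measure_pmf.expectation (trans G s a) (\<lambda>s'. measure_pmf.expectation (gen G \<pi> n (past@[(s,a)]) s') (\<lambda>r. f ((s,a)#r)))"
      using len_gen[OF vp] by (subst exp_bind[OF _ fin, where A=UNIV]) auto
  qed
  finally show ?thesis .
qed


lemma ci_gen:
  fixes G :: "('s::finite, 'i::finite, 'a, 'o::finite) posg" and \<phi> :: "('s \<times> ('i \<Rightarrow> 'a)) list \<Rightarrow> 's \<Rightarrow> real"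
  assumes wf: "wf_posg G" and vp: "valid_policy G \<pi>"
  shows "k < n \<Longrightarrow> measure_pmf.expectation (gen G \<pi> n past s) (\<lambda>r. (if snd (r!k) i = b then 1 else 0) * \<phi> (take k r) (fst (r!k))) =
     measure_pmf.expectation (gen G \<pi> n past s) (\<lambda>r. pmf (\<pi> i (hist G i (past @ take k r) (fst (r!k)))) b * \<phi> (take k r) (fst (r!k)))"
proof (induction k arbitrary: n past s \<phi>)
  case 0
  then obtain n' where n: "n = Suc n'" by (cases n) auto
  have m: "measure_pmf.expectation (Pi_pmf UNIV undefined (\<lambda>j. \<pi> j (hist G j past s))) (\<lambda>a. if a i = b then 1::real else 0) = pmf (\<pi> i (hist G i past s)) b"
  proof -
    have "measure_pmf.expectation (Pi_pmf UNIV undefined (\<lambda>j. \<pi> j (hist G j past s))) (\<lambda>a. if a i = b then 1::real else 0)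
       = measure_pmf.expectation (map_pmf (\<lambda>a. a i) (Pi_pmf UNIV undefined (\<lambda>j. \<pi> j (hist G j past s)))) (\<lambda>x. if x = b then 1::real else 0)"
      by (simp only: integral_map_pmf)
    also have "map_pmf (\<lambda>a. a i) (Pi_pmf UNIV undefined (\<lambda>j. \<pi> j (hist G j past s))) = \<pi> i (hist G i past s)"
      by (simp add: Pi_pmf_component)
    also have "measure_pmf.expectation (\<pi> i (hist G i past s)) (\<lambda>x. if x = b then 1::real else 0) = pmf (\<pi> i (hist G i past s)) b"
      by (subst integral_measure_pmf_real[where A="{b}"]) (auto split: if_splits)
    finally show ?thesis .
  qed
  show ?case unfolding n exp_gen_Suc[OF wf vp] using m by simp
next
  case (Suc k)
  then obtain n' where n: "n = Suc n'" and k: "k < n'" by (cases n) auto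
  have IH: "measure_pmf.expectation (gen G \<pi> n' (past@[(s,a)]) s') (\<lambda>r. (if snd (r!k) i = b then 1 else 0) * \<phi> ((s,a) # take k r) (fst (r!k)))
    = measure_pmf.expectation (gen G \<pi> n' (past@[(s,a)]) s') (\<lambda>r. pmf (\<pi> i (hist G i ((past@[(s,a)]) @ take k r) (fst (r!k)))) b * \<phi> ((s,a) # take k r) (fst (r!k)))"
    for a s'
    using Suc.IH[OF k, of "past@[(s,a)]" s' "\<lambda>l x. \<phi> ((s,a)#l) x"] by simp
  show ?case unfolding n exp_gen_Suc[OF wf vp]
    apply (rule Bochner_Integration.integral_cong[OF refl])
    apply (rule Bochner_Integration.integral_cong[OF refl])
    subgoal for a s' using IH[of a s'] by simp
    done
qed

lemma exp_traj:
  fixes G :: "('s::finite, 'i::finite, 'a, 'o::finite) posg" and f :: "('s \<times> ('i \<Rightarrow> 'a)) list \<Rightarrow> real"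
  assumes wf: "wf_posg G" and vp: "valid_policy G \<pi>"
  shows "measure_pmf.expectation (traj G \<pi>) f = measure_pmf.expectation (init G) (\<lambda>s. measure_pmf.expectation (gen G \<pi> (horizon G) [] s) f)"
  unfolding traj_def by (rule exp_bind[OF _ finite_TrS[OF wf], where A=UNIV]) (auto intro: set_gen[OF vp, of "horizon G", THEN subsetD])

lemma ci_traj:
  fixes G :: "('s::finite, 'i::finite, 'a, 'o::finite) posg" and \<phi> :: "('s \<times> ('i \<Rightarrow> 'a)) list \<Rightarrow> 's \<Rightarrow> real"
  assumes wf: "wf_posg G" and vp: "valid_policy G \<pi>" and t: "t < horizon G"
  shows "measure_pmf.expectation (traj G \<pi>) (\<lambda>tr. (if snd (tr!t) i = b then 1 else 0) * \<phi> (take t tr) (fst (tr!t))) =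
     measure_pmf.expectation (traj G \<pi>) (\<lambda>tr. pmf (\<pi> i (Hi G i t tr)) b * \<phi> (take t tr) (fst (tr!t)))"
proof -
  have "measure_pmf.expectation (gen G \<pi> (horizon G) [] s) (\<lambda>tr. (if snd (tr!t) i = b then 1 else 0) * \<phi> (take t tr) (fst (tr!t))) =
     measure_pmf.expectation (gen G \<pi> (horizon G) [] s) (\<lambda>tr. pmf (\<pi> i (Hi G i t tr)) b * \<phi> (take t tr) (fst (tr!t)))" for s
    using ci_gen[OF wf vp t, where past="[]" and s=s and \<phi>=\<phi> and i=i and b=b] by (simp add: Hi_def)
  thus ?thesis unfolding exp_traj[OF wf vp] by simp
qed

lemma grp:
  assumes "finite S"
  shows "(\<Sum>x\<in>S. g x) = (\<Sum>v\<in>K`S. \<Sum>x\<in>S. if K x = v then g x else 0)"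
  using assms by (simp add: sum.image_gen[of S g K] sum.inter_filter)

lemma null_event:
  fixes p :: "'x pmf"
  assumes S: "finite S" "set_pmf p \<subseteq> S"
    and P0: "(\<Sum>x\<in>S. pmf p x * (if A x then 1 else 0)) = 0"
  shows "(\<Sum>x\<in>S. pmf p x * (if A x then f x else 0)) = 0"
proof -
  have "\<forall>x\<in>S. pmf p x * (if A x then 1 else 0) = 0"
    using P0 by (subst sum_nonneg_eq_0_iff[symmetric]) (auto simp: S)
  thus ?thesis by (intro sum.neutral) auto
qed

lemma sum_if_K:
  "(\<Sum>x\<in>S. if K x = v then pmf p x * C else 0) = C * (\<Sum>x\<in>S. pmf p x * (if K x = v then 1 else (0::real)))"
  by (auto simp: sum_distrib_left intro!: sum.cong)

lemma sum_if_K2: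
  "(\<Sum>x\<in>S. if K x = v then (if c then pmf p x * C else 0) else 0) = (if c then C * (\<Sum>x\<in>S. pmf p x * (if K x = v then 1 else (0::real))) else 0)"
  by (cases c) (simp_all add: sum_if_K cong: if_cong)

lemma tower:
  fixes p :: "'x pmf" and f :: "'x \<Rightarrow> real"
  assumes S: "finite S" "set_pmf p \<subseteq> S" and ev: "\<And>x. x \<in> S \<Longrightarrow> Ev x = e (K x)"
  shows "measure_pmf.expectation p (\<lambda>x. if Ev x then cexp p (\<lambda>y. K y = K x) f else 0)
       = measure_pmf.expectation p (\<lambda>x. if Ev x then f x else 0)"
proof -
  define N where "N v = (\<Sum>x\<in>S. pmf p x * (if K x = v then f x else 0))" for v
  define P where "P v = (\<Sum>x\<in>S. pmf p x * (if K x = v then 1 else 0))" for v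
  have ce: "cexp p (\<lambda>y. K y = v) f = N v / P v" for v
    unfolding cexp_def N_def P_def using exp_sum[OF S] prob_sum[OF S] by simp
  have NP: "N v / P v * P v = N v" for v
  proof (cases "P v = 0")
    case True
    hence "N v = 0" unfolding N_def using null_event[OF S, of "\<lambda>x. K x = v"] P_def by simp
    thus ?thesis by simp
  qed simp
  have "measure_pmf.expectation p (\<lambda>x. if Ev x then cexp p (\<lambda>y. K y = K x) f else 0)
      = (\<Sum>x\<in>S. pmf p x * (if Ev x then N (K x) / P (K x) else 0))"
    unfolding exp_sum[OF S] by (intro sum.cong refl) (simp add: ce[of "K x" for x])
  also have "\<dots> = (\<Sum>v\<in>K`S. \<Sum>x\<in>S. if K x = v then (if e v then pmf p x * (N v / P v) else 0) else 0)"
    by (subst grp[OF S(1), of _ K]) (auto intro!: sum.cong simp: ev)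
  also have "\<dots> = (\<Sum>v\<in>K`S. (if e v then N v / P v * P v else 0))"
    apply (intro sum.cong refl)
    subgoal for v by (simp only: sum_if_K2 P_def)
    done
  also have "\<dots> = (\<Sum>v\<in>K`S. (if e v then N v else 0))" by (intro sum.cong refl) (simp only: NP)
  also have "\<dots> = (\<Sum>v\<in>K`S. \<Sum>x\<in>S. if K x = v then pmf p x * (if Ev x then f x else 0) else 0)"
  proof (intro sum.cong refl)
    fix v
    have pw: "x \<in> S \<Longrightarrow> (if K x = v then pmf p x * (if Ev x then f x else 0) else 0) = (if e v then pmf p x * (if K x = v then f x else 0) else 0)" for x
      using ev[of x] by auto
    show "(if e v then N v else 0) = (\<Sum>x\<in>S. if K x = v then pmf p x * (if Ev x then f x else 0) else 0)"
      by (cases "e v") (simp_all add: N_def pw cong: sum.cong)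
  qed
  also have "\<dots> = (\<Sum>x\<in>S. pmf p x * (if Ev x then f x else 0))"
    by (rule grp[OF S(1), symmetric])
  also have "\<dots> = measure_pmf.expectation p (\<lambda>x. if Ev x then f x else 0)"
    by (simp add: exp_sum[OF S])
  finally show ?thesis .
qed

lemma cond_split:
  fixes p :: "'x pmf" and X :: "'x \<Rightarrow> real"
  assumes S: "finite S" "set_pmf p \<subseteq> S" and c: "c > 0"
    and pr: "\<And>v. Q v \<Longrightarrow> measure_pmf.prob p {x. K x = v \<and> B x} = c * measure_pmf.prob p {x. K x = v}"
  shows "c * measure_pmf.expectation p (\<lambda>x. if Q (K x) then cexp p (\<lambda>y. K y = K x \<and> B y) X else 0)
       = measure_pmf.expectation p (\<lambda>x. if Q (K x) \<and> B x then X x else 0)"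
proof -
  define N where "N v = (\<Sum>x\<in>S. pmf p x * (if K x = v \<and> B x then X x else 0))" for v
  define P' where "P' v = (\<Sum>x\<in>S. pmf p x * (if K x = v \<and> B x then 1 else 0))" for v
  define P where "P v = (\<Sum>x\<in>S. pmf p x * (if K x = v then 1 else 0))" for v
  have ce: "cexp p (\<lambda>y. K y = v \<and> B y) X = N v / P' v" for v
    unfolding cexp_def N_def P'_def using exp_sum[OF S] prob_sum[OF S] by simp
  have pr': "Q v \<Longrightarrow> P' v = c * P v" for v
    using pr[of v] unfolding P'_def P_def using prob_sum[OF S] by simp
  have NP: "c * (N v / P' v * P v) = N v" if "Q v" for v
  proof (cases "P v = 0")
    case True
    hence "P' v = 0" using pr'[OF that] by simp
    hence "N v = 0" unfolding N_def using null_event[OF S, of "\<lambda>x. K x = v \<and> B x"] P'_def by simp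
    thus ?thesis by simp
  next
    case False thus ?thesis using pr'[OF that] c by simp
  qed
  have "c * measure_pmf.expectation p (\<lambda>x. if Q (K x) then cexp p (\<lambda>y. K y = K x \<and> B y) X else 0)
      = c * (\<Sum>x\<in>S. pmf p x * (if Q (K x) then N (K x) / P' (K x) else 0))"
    unfolding exp_sum[OF S] by (intro arg_cong[where f="\<lambda>z. c * z"] sum.cong refl) (simp add: ce[of "K x" for x])
  also have "\<dots> = c * (\<Sum>v\<in>K`S. \<Sum>x\<in>S. if K x = v then (if Q v then pmf p x * (N v / P' v) else 0) else 0)"
    by (subst grp[OF S(1), of _ K]) (auto intro!: sum.cong)
  also have "\<dots> = c * (\<Sum>v\<in>K`S. (if Q v then N v / P' v * P v else 0))"
    by (intro arg_cong[where f="\<lambda>z. c * z"] sum.cong refl) (simp only: sum_if_K2 P_def)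
  also have "\<dots> = (\<Sum>v\<in>K`S. (if Q v then N v else 0))" unfolding sum_distrib_left
    apply (intro sum.cong refl)
    subgoal for v using NP[of v] by (cases "Q v") auto
    done
  also have "\<dots> = (\<Sum>v\<in>K`S. \<Sum>x\<in>S. if K x = v then pmf p x * (if Q (K x) \<and> B x then X x else 0) else 0)"
    by (intro sum.cong refl) (auto simp: N_def intro!: sum.cong cong: if_cong)
  also have "\<dots> = (\<Sum>x\<in>S. pmf p x * (if Q (K x) \<and> B x then X x else 0))"
    by (rule grp[OF S(1), symmetric])
  also have "\<dots> = measure_pmf.expectation p (\<lambda>x. if Q (K x) \<and> B x then X x else 0)"
    by (simp add: exp_sum[OF S])
  finally show ?thesis .
qed


lemma prob_exp:
  fixes p :: "'x pmf"
  assumes "finite S" "set_pmf p \<subseteq> S"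
  shows "measure_pmf.prob p {x. A x} = measure_pmf.expectation p (\<lambda>x. if A x then 1 else 0)"
  using prob_sum[OF assms] exp_sum[OF assms] by simp

lemma prob_pos_ex:
  assumes "measure_pmf.prob p {x. A x} > 0" shows "\<exists>x\<in>set_pmf p. A x"
proof (rule ccontr)
  assume "\<not> ?thesis"
  hence "{x. A x} \<inter> set_pmf p = {}" by auto
  hence "measure_pmf.prob p {x. A x} = 0" using measure_Int_set_pmf[of p "{x. A x}"] by simp
  thus False using assms by simp
qed

lemma Gge_Suc: "t < length tr \<Longrightarrow> Gge G i t tr = rew G i (fst (tr!t)) (snd (tr!t)) + Gge G i (Suc t) tr"
  by (simp add: Gge_def sum.atLeast_Suc_lessThan)

lemma ci_event:
  fixes G :: "('s::finite, 'i::finite, 'a, 'o::finite) posg"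
  assumes wf: "wf_posg G" and vp: "valid_policy G \<pi>" and tT: "t < horizon G"
  shows "measure_pmf.expectation (traj G \<pi>) (\<lambda>x. if A (take t x) (fst (x!t)) \<and> snd (x!t) i = b then F (take t x) (fst (x!t)) else 0)
   = measure_pmf.expectation (traj G \<pi>) (\<lambda>x. if A (take t x) (fst (x!t)) then pmf (\<pi> i (Hi G i t x)) b * F (take t x) (fst (x!t)) else 0)"
proof -
  note ci = ci_traj[OF wf vp tT, where \<phi>="\<lambda>l s. if A l s then F l s else 0" and i=i and b=b]
  have "measure_pmf.expectation (traj G \<pi>) (\<lambda>x. if A (take t x) (fst (x!t)) \<and> snd (x!t) i = b then F (take t x) (fst (x!t)) else 0)
     = measure_pmf.expectation (traj G \<pi>) (\<lambda>x. (if snd (x!t) i = b then 1 else 0) * (if A (take t x) (fst (x!t)) then F (take t x) (fst (x!t)) else 0))"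
    by (intro Bochner_Integration.integral_cong refl) simp
  also have "\<dots> = measure_pmf.expectation (traj G \<pi>) (\<lambda>x. pmf (\<pi> i (Hi G i t x)) b * (if A (take t x) (fst (x!t)) then F (take t x) (fst (x!t)) else 0))"
    by (rule ci)
  also have "\<dots> = measure_pmf.expectation (traj G \<pi>) (\<lambda>x. if A (take t x) (fst (x!t)) then pmf (\<pi> i (Hi G i t x)) b * F (take t x) (fst (x!t)) else 0)"
    by (intro Bochner_Integration.integral_cong refl) simp
  finally show ?thesis .
qed

lemma Hj_eq: "Hj G t tr = (\<lambda>j. hist G j (take t tr) (fst (tr!t)))"
  by (simp add: Hj_def Hi_def)

lemma q_ident:
  fixes G :: "('s::finite, 'i::finite, 'a, 'o::finite) posg"
  assumes wf: "wf_posg G" and vp: "valid_policy G \<pi>" and fm: "fully_mixed G \<pi>"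
    and re: "reached G \<pi> i h" and b: "b \<in> acts G i"
    and t: "t = length (fst h)"
  shows "measure_pmf.prob (traj G \<pi>) {tr. Hi G i t tr = h} * pmf (\<pi> i h) b * qdp G i \<pi> h b =
         measure_pmf.expectation (traj G \<pi>) (\<lambda>tr. if Hi G i t tr = h \<and> snd (tr!t) i = b then Gge G i t tr else 0)"
proof -
  let ?p = "traj G \<pi>"
  let ?S = "TrS G (horizon G)"
  have S: "finite ?S" "set_pmf ?p \<subseteq> ?S" using finite_TrS[OF wf] set_traj[OF vp] by auto
  have tT: "t < horizon G" using re t by (simp add: reached_def)
  have Ph: "measure_pmf.prob ?p {tr. Hi G i t tr = h} > 0" using re t by (simp add: reached_def)
  then obtain tr0 where tr0: "tr0 \<in> set_pmf ?p" "Hi G i t tr0 = h" using prob_pos_ex by blast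
  have hacts: "set (map snd (fst h)) \<subseteq> acts G i" using Hi_acts[of tr0 G "horizon G" t i] tr0 S tT by auto
  have c: "pmf (\<pi> i h) b > 0" using fm hacts b unfolding fully_mixed_def by blast
  define X where "X = (\<lambda>tr. rew G i (fst (tr!t)) (snd (tr!t)) + vval G i \<pi> (Suc t) (Hj G (Suc t) tr))"
  have s1: "measure_pmf.prob ?p {tr. Hi G i t tr = h} * qdp G i \<pi> h b =
      measure_pmf.expectation ?p (\<lambda>tr. if Hi G i t tr = h then qjoint G i \<pi> t (Hj G t tr) b else 0)"
    using Ph unfolding qdp_def Let_def cexp_def t[symmetric] by simp
  have pr: "measure_pmf.prob ?p {x. Hj G t x = v \<and> snd (x!t) i = b} = pmf (\<pi> i h) b * measure_pmf.prob ?p {x. Hj G t x = v}"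
    if v: "v i = h" for v
  proof -
    have "measure_pmf.prob ?p {x. Hj G t x = v \<and> snd (x!t) i = b} =
      measure_pmf.expectation ?p (\<lambda>x. if (\<lambda>j. hist G j (take t x) (fst (x!t))) = v \<and> snd (x!t) i = b then 1 else 0)"
      by (simp add: prob_exp[OF S] Hj_eq)
    also have "\<dots> = measure_pmf.expectation ?p (\<lambda>x. if (\<lambda>j. hist G j (take t x) (fst (x!t))) = v then pmf (\<pi> i (Hi G i t x)) b * 1 else 0)"
      by (rule ci_event[OF wf vp tT])
    also have "\<dots> = measure_pmf.expectation ?p (\<lambda>x. pmf (\<pi> i h) b * (if Hj G t x = v then 1 else 0))"
      by (intro Bochner_Integration.integral_cong refl) (use v in \<open>auto simp: Hj_eq Hi_def\<close>)
    also have "\<dots> = pmf (\<pi> i h) b * measure_pmf.prob ?p {x. Hj G t x = v}"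
      by (simp add: prob_exp[OF S])
    finally show ?thesis .
  qed
  have s2: "pmf (\<pi> i h) b * measure_pmf.expectation ?p (\<lambda>tr. if Hj G t tr i = h then cexp ?p (\<lambda>y. Hj G t y = Hj G t tr \<and> snd (y!t) i = b) X else 0)
      = measure_pmf.expectation ?p (\<lambda>tr. if Hj G t tr i = h \<and> snd (tr!t) i = b then X tr else 0)"
    by (rule cond_split[OF S c, where K="Hj G t" and Q="\<lambda>v. v i = h" and B="\<lambda>x. snd (x!t) i = b"]) (rule pr)
  have s3: "measure_pmf.expectation ?p (\<lambda>tr. if Hi G i t tr = h \<and> snd (tr!t) i = b then vval G i \<pi> (Suc t) (Hj G (Suc t) tr) else 0)
      = measure_pmf.expectation ?p (\<lambda>tr. if Hi G i t tr = h \<and> snd (tr!t) i = b then Gge G i (Suc t) tr else 0)"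
    unfolding vval_def
  proof (rule tower[OF S, where K="Hj G (Suc t)" and e="\<lambda>v. bk (v i) = h \<and> lact (v i) = b"])
    fix x assume "x \<in> ?S"
    hence "Suc t \<le> length x" using tT by (simp add: TrS_def)
    thus "(Hi G i t x = h \<and> snd (x!t) i = b) = (bk (Hj G (Suc t) x i) = h \<and> lact (Hj G (Suc t) x i) = b)"
      using Hi_back[of t x G i] by (simp add: Hj_def)
  qed
  have s4: "measure_pmf.expectation ?p (\<lambda>tr. if Hi G i t tr = h \<and> snd (tr!t) i = b then X tr else 0)
      = measure_pmf.expectation ?p (\<lambda>tr. if Hi G i t tr = h \<and> snd (tr!t) i = b then Gge G i t tr else 0)"
  proof -
    have "measure_pmf.expectation ?p (\<lambda>tr. if Hi G i t tr = h \<and> snd (tr!t) i = b then X tr else 0)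
      = measure_pmf.expectation ?p (\<lambda>tr. if Hi G i t tr = h \<and> snd (tr!t) i = b then rew G i (fst (tr!t)) (snd (tr!t)) else 0)
      + measure_pmf.expectation ?p (\<lambda>tr. if Hi G i t tr = h \<and> snd (tr!t) i = b then vval G i \<pi> (Suc t) (Hj G (Suc t) tr) else 0)"
      unfolding exp_sum[OF S] X_def by (simp add: sum.distrib[symmetric] algebra_simps if_distrib cong: if_cong)
    also have "\<dots> = measure_pmf.expectation ?p (\<lambda>tr. if Hi G i t tr = h \<and> snd (tr!t) i = b then rew G i (fst (tr!t)) (snd (tr!t)) else 0)
      + measure_pmf.expectation ?p (\<lambda>tr. if Hi G i t tr = h \<and> snd (tr!t) i = b then Gge G i (Suc t) tr else 0)"
      by (simp only: s3)
    also have "\<dots> = measure_pmf.expectation ?p (\<lambda>tr. if Hi G i t tr = h \<and> snd (tr!t) i = b then Gge G i t tr else 0)"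
      unfolding exp_sum[OF S] sum.distrib[symmetric]
    proof (intro sum.cong refl)
      fix x assume "x \<in> ?S"
      hence "t < length x" using tT by (simp add: TrS_def)
      thus "pmf ?p x * (if Hi G i t x = h \<and> snd (x!t) i = b then rew G i (fst (x!t)) (snd (x!t)) else 0) +
            pmf ?p x * (if Hi G i t x = h \<and> snd (x!t) i = b then Gge G i (Suc t) x else 0) =
            pmf ?p x * (if Hi G i t x = h \<and> snd (x!t) i = b then Gge G i t x else 0)"
        by (simp add: Gge_Suc algebra_simps)
    qed
    finally show ?thesis .
  qed
  have "measure_pmf.prob ?p {tr. Hi G i t tr = h} * pmf (\<pi> i h) b * qdp G i \<pi> h b
     = pmf (\<pi> i h) b * (measure_pmf.prob ?p {tr. Hi G i t tr = h} * qdp G i \<pi> h b)" by simp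
  also have "\<dots> = pmf (\<pi> i h) b * measure_pmf.expectation ?p (\<lambda>tr. if Hj G t tr i = h then cexp ?p (\<lambda>y. Hj G t y = Hj G t tr \<and> snd (y!t) i = b) X else 0)"
    unfolding s1 qjoint_def X_def by (simp add: Hj_def)
  also have "\<dots> = measure_pmf.expectation ?p (\<lambda>tr. if Hi G i t tr = h \<and> snd (tr!t) i = b then X tr else 0)"
    unfolding s2 by (simp add: Hj_def)
  also have "\<dots> = measure_pmf.expectation ?p (\<lambda>tr. if Hi G i t tr = h \<and> snd (tr!t) i = b then Gge G i t tr else 0)"
    by (rule s4)
  finally show ?thesis .
qed


definition mq :: "('s::finite, 'i::finite, 'a, 'o::finite) posg \<Rightarrow> ('i, 'o, 'a) policy \<Rightarrow> 'i \<Rightarrow> ('o, 'a) dpoint \<Rightarrow> real" where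
  "mq G \<pi> i h = (\<Sum>b\<in>acts G i. pmf (\<pi> i h) b * qdp G i \<pi> h b)"

definition dd :: "('s::finite, 'i::finite, 'a, 'o::finite) posg \<Rightarrow> ('i, 'o, 'a) policy \<Rightarrow> 'i \<Rightarrow> ('o, 'a) dpoint \<Rightarrow> 'a \<Rightarrow> real" where
  "dd G \<pi> i h b = (if reached G \<pi> i h then qdp G i \<pi> h b - mq G \<pi> i h else 0)"

definition Vq :: "('s::finite, 'i::finite, 'a, 'o::finite) posg \<Rightarrow> ('i, 'o, 'a) policy \<Rightarrow> 'i \<Rightarrow> ('o, 'a) dpoint \<Rightarrow> real" where
  "Vq G \<pi> i h = (\<Sum>b\<in>acts G i. pmf (\<pi> i h) b * (qdp G i \<pi> h b - mq G \<pi> i h)^2)"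

lemma sum_acts:
  fixes G :: "('s::finite, 'i::finite, 'a, 'o::finite) posg"
  assumes wf: "wf_posg G" and vp: "valid_policy G \<pi>"
  shows "(\<Sum>b\<in>acts G i. pmf (\<pi> i h) b) = 1"
proof -
  have "set_pmf (\<pi> i h) \<subseteq> acts G i" using vp unfolding valid_policy_def by (metis prod.collapse)
  thus ?thesis using wf by (intro sum_pmf_eq_1) (auto simp: wf_posg_def)
qed

lemma term_ident:
  fixes G :: "('s::finite, 'i::finite, 'a, 'o::finite) posg"
  assumes wf: "wf_posg G" and vp: "valid_policy G \<pi>" and fm: "fully_mixed G \<pi>"
    and re: "reached G \<pi> i h" and t: "t = length (fst h)"
  shows "(\<Sum>tr\<in>TrS G (horizon G). if Hi G i t tr = h then pmf (traj G \<pi>) tr * ret G i tr * dd G \<pi> i h (snd (tr!t) i) else 0)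
     = measure_pmf.prob (traj G \<pi>) {tr. Hi G i t tr = h} * Vq G \<pi> i h"
proof -
  let ?p = "traj G \<pi>"
  let ?S = "TrS G (horizon G)"
  let ?Ph = "measure_pmf.prob ?p {tr. Hi G i t tr = h}"
  define c where "c b = pmf (\<pi> i h) b" for b
  define q where "q b = qdp G i \<pi> h b" for b
  define m where "m = mq G \<pi> i h"
  have S: "finite ?S" "set_pmf ?p \<subseteq> ?S" using finite_TrS[OF wf] set_traj[OF vp] by auto
  have tT: "t < horizon G" using re t by (simp add: reached_def)
  have fa: "finite (acts G i)" using wf by (simp add: wf_posg_def)
  have ddq: "dd G \<pi> i h b = q b - m" for b using re by (simp add: dd_def q_def m_def)
  define F where "F = (\<lambda>(l::('s \<times> ('i \<Rightarrow> 'a)) list) (s::'s). \<Sum>k<t. rew G i (fst (l!k)) (snd (l!k)))"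
  define G0 where "G0 = measure_pmf.expectation ?p (\<lambda>tr. if Hi G i t tr = h then F (take t tr) (fst (tr!t)) else 0)"
  have step1: "(\<Sum>tr\<in>?S. if Hi G i t tr = h then pmf ?p tr * ret G i tr * dd G \<pi> i h (snd (tr!t) i) else 0)
     = (\<Sum>b\<in>acts G i. dd G \<pi> i h b * measure_pmf.expectation ?p (\<lambda>tr. if Hi G i t tr = h \<and> snd (tr!t) i = b then ret G i tr else 0))"
  proof -
    have "(\<Sum>tr\<in>?S. if Hi G i t tr = h then pmf ?p tr * ret G i tr * dd G \<pi> i h (snd (tr!t) i) else 0)
      = (\<Sum>tr\<in>?S. \<Sum>b\<in>acts G i. dd G \<pi> i h b * (pmf ?p tr * (if Hi G i t tr = h \<and> snd (tr!t) i = b then ret G i tr else 0)))"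
    proof (intro sum.cong refl)
      fix tr assume tr: "tr \<in> ?S"
      have "tr ! t \<in> set tr" using tr tT by (simp add: TrS_def)
      hence a: "snd (tr!t) i \<in> acts G i" using tr by (auto simp: TrS_def AS_def)
      have "(\<Sum>b\<in>acts G i. dd G \<pi> i h b * (pmf ?p tr * (if Hi G i t tr = h \<and> snd (tr!t) i = b then ret G i tr else 0)))
        = (\<Sum>b\<in>acts G i. if b = snd (tr!t) i then dd G \<pi> i h b * (pmf ?p tr * (if Hi G i t tr = h then ret G i tr else 0)) else 0)"
        by (intro sum.cong refl) auto
      also have "\<dots> = dd G \<pi> i h (snd (tr!t) i) * (pmf ?p tr * (if Hi G i t tr = h then ret G i tr else 0))"
        using a fa by (simp add: sum.delta)
      finally show "(if Hi G i t tr = h then pmf ?p tr * ret G i tr * dd G \<pi> i h (snd (tr!t) i) else 0)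
        = (\<Sum>b\<in>acts G i. dd G \<pi> i h b * (pmf ?p tr * (if Hi G i t tr = h \<and> snd (tr!t) i = b then ret G i tr else 0)))"
        by simp
    qed
    also have "\<dots> = (\<Sum>b\<in>acts G i. dd G \<pi> i h b * (\<Sum>tr\<in>?S. pmf ?p tr * (if Hi G i t tr = h \<and> snd (tr!t) i = b then ret G i tr else 0)))"
      by (simp add: sum.swap[of _ ?S] sum_distrib_left)
    finally show ?thesis by (simp add: exp_sum[OF S])
  qed
  have step2: "measure_pmf.expectation ?p (\<lambda>tr. if Hi G i t tr = h \<and> snd (tr!t) i = b then ret G i tr else 0)
     = c b * G0 + ?Ph * c b * q b" if b: "b \<in> acts G i" for b
  proof -
    have "measure_pmf.expectation ?p (\<lambda>tr. if Hi G i t tr = h \<and> snd (tr!t) i = b then ret G i tr else 0)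
      = measure_pmf.expectation ?p (\<lambda>tr. if hist G i (take t tr) (fst (tr!t)) = h \<and> snd (tr!t) i = b then F (take t tr) (fst (tr!t)) else 0)
      + measure_pmf.expectation ?p (\<lambda>tr. if Hi G i t tr = h \<and> snd (tr!t) i = b then Gge G i t tr else 0)"
      unfolding exp_sum[OF S] sum.distrib[symmetric]
    proof (intro sum.cong refl)
      fix x assume "x \<in> ?S"
      hence tx: "t \<le> length x" using tT by (simp add: TrS_def)
      have "ret G i x = F (take t x) (fst (x!t)) + Gge G i t x"
      proof -
        have "ret G i x = (\<Sum>k<length x. rew G i (fst (x!k)) (snd (x!k)))"
        proof -
          have "ret G i x = (\<Sum>k<length x. map (\<lambda>(s, a). rew G i s a) x ! k)"
            unfolding ret_def by (simp add: sum_list_sum_nth atLeast0LessThan)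
          also have "\<dots> = (\<Sum>k<length x. rew G i (fst (x!k)) (snd (x!k)))"
            by (intro sum.cong refl) (auto simp: case_prod_beta)
          finally show ?thesis .
        qed
        also have "\<dots> = (\<Sum>k\<in>{0..<t}. rew G i (fst (x!k)) (snd (x!k))) + (\<Sum>k\<in>{t..<length x}. rew G i (fst (x!k)) (snd (x!k)))"
          using sum.atLeastLessThan_concat[of 0 t "length x" "\<lambda>k. rew G i (fst (x!k)) (snd (x!k))"] tx
          by (simp add: atLeast0LessThan)
        also have "(\<Sum>k\<in>{0..<t}. rew G i (fst (x!k)) (snd (x!k))) = F (take t x) (fst (x!t))"
          unfolding F_def atLeast0LessThan by (intro sum.cong refl) simp
        finally show ?thesis by (simp add: Gge_def)
      qed
      thus "pmf ?p x * (if Hi G i t x = h \<and> snd (x!t) i = b then ret G i x else 0) =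
        pmf ?p x * (if hist G i (take t x) (fst (x!t)) = h \<and> snd (x!t) i = b then F (take t x) (fst (x!t)) else 0) +
        pmf ?p x * (if Hi G i t x = h \<and> snd (x!t) i = b then Gge G i t x else 0)"
        by (simp add: Hi_def algebra_simps)
    qed
    also have "measure_pmf.expectation ?p (\<lambda>tr. if hist G i (take t tr) (fst (tr!t)) = h \<and> snd (tr!t) i = b then F (take t tr) (fst (tr!t)) else 0)
       = measure_pmf.expectation ?p (\<lambda>tr. if hist G i (take t tr) (fst (tr!t)) = h then pmf (\<pi> i (Hi G i t tr)) b * F (take t tr) (fst (tr!t)) else 0)"
      by (rule ci_event[OF wf vp tT])
    also have "\<dots> = measure_pmf.expectation ?p (\<lambda>tr. c b * (if hist G i (take t tr) (fst (tr!t)) = h then F (take t tr) (fst (tr!t)) else 0))"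
      unfolding c_def by (intro Bochner_Integration.integral_cong refl) (simp add: Hi_def)
    also have "\<dots> = c b * G0"
      unfolding G0_def Hi_def by simp
    also have "measure_pmf.expectation ?p (\<lambda>tr. if Hi G i t tr = h \<and> snd (tr!t) i = b then Gge G i t tr else 0)
       = ?Ph * c b * q b"
      unfolding c_def q_def by (rule q_ident[OF wf vp fm re b t, symmetric])
    finally show ?thesis .
  qed
  have sc: "(\<Sum>b\<in>acts G i. c b) = 1" unfolding c_def by (rule sum_acts[OF wf vp])
  have z: "(\<Sum>b\<in>acts G i. c b * (q b - m)) = 0"
  proof -
    have "(\<Sum>b\<in>acts G i. c b * (q b - m)) = (\<Sum>b\<in>acts G i. c b * q b) - m * (\<Sum>b\<in>acts G i. c b)"
      by (simp add: algebra_simps sum_subtractf sum_distrib_left)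
    also have "\<dots> = 0" using sc by (simp add: m_def mq_def c_def q_def)
    finally show ?thesis .
  qed
  have "(\<Sum>tr\<in>?S. if Hi G i t tr = h then pmf ?p tr * ret G i tr * dd G \<pi> i h (snd (tr!t) i) else 0)
     = (\<Sum>b\<in>acts G i. (q b - m) * (c b * G0 + ?Ph * c b * q b))"
    unfolding step1 by (intro sum.cong refl) (simp add: step2 ddq)
  also have "\<dots> = G0 * (\<Sum>b\<in>acts G i. c b * (q b - m)) + ?Ph * (\<Sum>b\<in>acts G i. c b * (q b - m)^2) + ?Ph * m * (\<Sum>b\<in>acts G i. c b * (q b - m))"
    by (simp add: sum_distrib_left sum.distrib[symmetric] power2_eq_square algebra_simps)
  also have "\<dots> = ?Ph * Vq G \<pi> i h" using z by (simp add: Vq_def c_def q_def m_def)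
  finally show ?thesis .
qed


lemma reached_acts:
  fixes G :: "('s::finite, 'i::finite, 'a, 'o::finite) posg"
  assumes wf: "wf_posg G" and vp: "valid_policy G \<pi>" and re: "reached G \<pi> i h"
  shows "set (map snd (fst h)) \<subseteq> acts G i"
proof -
  let ?t = "length (fst h)"
  have S: "finite (TrS G (horizon G))" "set_pmf (traj G \<pi>) \<subseteq> TrS G (horizon G)" using finite_TrS[OF wf] set_traj[OF vp] by auto
  have tT: "?t < horizon G" using re by (simp add: reached_def)
  have "measure_pmf.prob (traj G \<pi>) {tr. Hi G i ?t tr = h} > 0" using re by (simp add: reached_def)
  then obtain tr0 where tr0: "tr0 \<in> set_pmf (traj G \<pi>)" "Hi G i ?t tr0 = h" using prob_pos_ex by blast
  show ?thesis using Hi_acts[of tr0 G "horizon G" ?t i] tr0 S tT by auto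
qed

lemma fm_pos:
  assumes "fully_mixed G \<pi>" "set (map snd (fst h)) \<subseteq> acts G i" "b \<in> acts G i"
  shows "pmf (\<pi> i h) b > 0"
  using assms unfolding fully_mixed_def by blast

lemma pmf_out:
  assumes "valid_policy G \<pi>" "b \<notin> acts G i" shows "pmf (\<pi> i h) b = 0"
proof -
  have "set_pmf (\<pi> i h) \<subseteq> acts G i" using assms(1) unfolding valid_policy_def by (metis prod.collapse)
  thus ?thesis using assms(2) by (auto simp: set_pmf_eq)
qed

definition Zf :: "('s::finite, 'i::finite, 'a, 'o::finite) posg \<Rightarrow> ('i, 'o, 'a) policy \<Rightarrow> real \<Rightarrow> 'i \<Rightarrow> ('o, 'a) dpoint \<Rightarrow> real" where
  "Zf G \<pi> \<eta> i h = (\<Sum>b\<in>acts G i. pmf (\<pi> i h) b * exp (\<eta> * qdp G i \<pi> h b))"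

definition rho :: "('s::finite, 'i::finite, 'a, 'o::finite) posg \<Rightarrow> ('i, 'o, 'a) policy \<Rightarrow> real \<Rightarrow> 'i \<Rightarrow> ('o, 'a) dpoint \<Rightarrow> 'a \<Rightarrow> real" where
  "rho G \<pi> \<eta> i h b = (if reached G \<pi> i h then exp (\<eta> * qdp G i \<pi> h b) / Zf G \<pi> \<eta> i h else 1)"

definition PPol :: "('s::finite, 'i::finite, 'a, 'o::finite) posg \<Rightarrow> ('i, 'o, 'a) policy \<Rightarrow> real \<Rightarrow> ('i, 'o, 'a) policy" where
  "PPol G \<pi> \<eta> i h = (if reached G \<pi> i h then embed_pmf (\<lambda>b. pmf (\<pi> i h) b * rho G \<pi> \<eta> i h b) else \<pi> i h)"

lemma Zf_pos:
  fixes G :: "('s::finite, 'i::finite, 'a, 'o::finite) posg"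
  assumes wf: "wf_posg G" and vp: "valid_policy G \<pi>" and fm: "fully_mixed G \<pi>" and re: "reached G \<pi> i h"
  shows "Zf G \<pi> \<eta> i h > 0"
proof -
  obtain b0 where b0: "b0 \<in> acts G i" using wf by (auto simp: wf_posg_def)
  have fa: "finite (acts G i)" using wf by (simp add: wf_posg_def)
  have "pmf (\<pi> i h) b0 > 0" using fm_pos[OF fm reached_acts[OF wf vp re] b0] .
  thus ?thesis unfolding Zf_def using fa b0
    by (intro sum_pos2[where i=b0]) auto
qed

lemma Zf0:
  fixes G :: "('s::finite, 'i::finite, 'a, 'o::finite) posg"
  assumes wf: "wf_posg G" and vp: "valid_policy G \<pi>"
  shows "Zf G \<pi> 0 i h = 1"
  using sum_acts[OF wf vp] by (simp add: Zf_def)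

lemma pmf_PPol:
  fixes G :: "('s::finite, 'i::finite, 'a, 'o::finite) posg"
  assumes wf: "wf_posg G" and vp: "valid_policy G \<pi>" and fm: "fully_mixed G \<pi>"
  shows "pmf (PPol G \<pi> \<eta> i h) b = pmf (\<pi> i h) b * rho G \<pi> \<eta> i h b"
proof (cases "reached G \<pi> i h")
  case False thus ?thesis by (simp add: PPol_def rho_def)
next
  case True
  have Z: "Zf G \<pi> \<eta> i h > 0" using Zf_pos[OF wf vp fm True] .
  have fa: "finite (acts G i)" using wf by (simp add: wf_posg_def)
  let ?f = "\<lambda>b. pmf (\<pi> i h) b * rho G \<pi> \<eta> i h b"
  have nn: "0 \<le> ?f b" for b using Z True by (simp add: rho_def)
  have "(\<integral>\<^sup>+x. ennreal (?f x) \<partial>count_space UNIV) = (\<Sum>x\<in>acts G i. ennreal (?f x))"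
    using fa pmf_out[OF vp] by (intro nn_integral_count_space') auto
  also have "\<dots> = ennreal (\<Sum>x\<in>acts G i. ?f x)" using nn by (simp add: sum_ennreal)
  also have "(\<Sum>x\<in>acts G i. ?f x) = 1"
    using True Z unfolding Zf_def by (simp add: rho_def Zf_def sum_divide_distrib[symmetric])
  finally have "(\<integral>\<^sup>+x. ennreal (?f x) \<partial>count_space UNIV) = 1" by simp
  thus ?thesis using True nn by (simp add: PPol_def pmf_embed_pmf)
qed

lemma valid_PPol:
  fixes G :: "('s::finite, 'i::finite, 'a, 'o::finite) posg"
  assumes wf: "wf_posg G" and vp: "valid_policy G \<pi>" and fm: "fully_mixed G \<pi>"
  shows "valid_policy G (PPol G \<pi> \<eta>)"
  unfolding valid_policy_def
proof (intro allI subsetI)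
  fix i h b assume b: "b \<in> set_pmf (PPol G \<pi> \<eta> i h)"
  show "b \<in> acts G i"
  proof (rule ccontr)
    assume "b \<notin> acts G i"
    hence "pmf (PPol G \<pi> \<eta> i h) b = 0" by (simp add: pmf_PPol[OF wf vp fm] pmf_out[OF vp])
    thus False using b by (simp add: set_pmf_eq)
  qed
qed

lemma rho0:
  fixes G :: "('s::finite, 'i::finite, 'a, 'o::finite) posg"
  assumes wf: "wf_posg G" and vp: "valid_policy G \<pi>"
  shows "rho G \<pi> 0 i h b = 1"
  by (simp add: rho_def Zf0[OF wf vp])

lemma drho:
  fixes G :: "('s::finite, 'i::finite, 'a, 'o::finite) posg"
  assumes wf: "wf_posg G" and vp: "valid_policy G \<pi>"
  shows "((\<lambda>\<eta>. rho G \<pi> \<eta> i h b) has_real_derivative dd G \<pi> i h b) (at 0)"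
proof (cases "reached G \<pi> i h")
  case False thus ?thesis by (simp add: rho_def dd_def DERIV_const)
next
  case True
  have fa: "finite (acts G i)" using wf by (simp add: wf_posg_def)
  have dE: "((\<lambda>\<eta>. exp (\<eta> * qdp G i \<pi> h c)) has_real_derivative qdp G i \<pi> h c) (at 0)" for c
    by (auto intro!: derivative_eq_intros)
  have dZ: "((\<lambda>\<eta>. Zf G \<pi> \<eta> i h) has_real_derivative mq G \<pi> i h) (at 0)"
    unfolding Zf_def mq_def by (intro DERIV_sum DERIV_cmult dE)
  have "((\<lambda>\<eta>. exp (\<eta> * qdp G i \<pi> h b) / Zf G \<pi> \<eta> i h) has_real_derivative
     (qdp G i \<pi> h b * Zf G \<pi> 0 i h - mq G \<pi> i h * exp (0 * qdp G i \<pi> h b)) / (Zf G \<pi> 0 i h ^ Suc (Suc 0))) (at 0)"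
    by (rule DERIV_quotient[OF dE dZ]) (simp add: Zf0[OF wf vp])
  thus ?thesis using True by (simp add: rho_def dd_def Zf0[OF wf vp])
qed


lemma Vq_nonneg: "0 \<le> Vq G \<pi> i h"
  unfolding Vq_def by (intro sum_nonneg) simp

lemma Vq_pos:
  fixes G :: "('s::finite, 'i::finite, 'a, 'o::finite) posg"
  assumes wf: "wf_posg G" and vp: "valid_policy G \<pi>" and fm: "fully_mixed G \<pi>" and re: "reached G \<pi> i h"
    and b1: "b1 \<in> acts G i" and b2: "b2 \<in> acts G i" and ne: "qdp G i \<pi> h b1 \<noteq> qdp G i \<pi> h b2"
  shows "0 < Vq G \<pi> i h"
proof (rule ccontr)
  assume "\<not> 0 < Vq G \<pi> i h"
  hence V0: "Vq G \<pi> i h = 0" using Vq_nonneg[of G \<pi> i h] by simp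
  have fa: "finite (acts G i)" using wf by (simp add: wf_posg_def)
  have all0: "\<forall>b\<in>acts G i. pmf (\<pi> i h) b * (qdp G i \<pi> h b - mq G \<pi> i h)^2 = 0"
    using V0 unfolding Vq_def by (subst sum_nonneg_eq_0_iff[symmetric]) (auto simp: fa)
  have "qdp G i \<pi> h b = mq G \<pi> i h" if "b \<in> acts G i" for b
  proof -
    have "pmf (\<pi> i h) b > 0" using fm_pos[OF fm reached_acts[OF wf vp re] that] .
    thus ?thesis using all0 that by auto
  qed
  thus False using b1 b2 ne by simp
qed

lemma Dform:
  fixes G :: "('s::finite, 'i::finite, 'a, 'o::finite) posg"
  assumes wf: "wf_posg G" and vp: "valid_policy G \<pi>" and fm: "fully_mixed G \<pi>"
  shows "(\<Sum>tr\<in>TrS G (horizon G). pmf (traj G \<pi>) tr * ret G i tr * (\<Sum>t<horizon G. dd G \<pi> i (Hi G i t tr) (snd (tr!t) i)))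
    = (\<Sum>t<horizon G. \<Sum>h\<in>Hi G i t ` TrS G (horizon G). if reached G \<pi> i h then measure_pmf.prob (traj G \<pi>) {tr. Hi G i t tr = h} * Vq G \<pi> i h else 0)"
proof -
  let ?S = "TrS G (horizon G)"
  let ?p = "traj G \<pi>"
  have fS: "finite ?S" using finite_TrS[OF wf] .
  have "(\<Sum>tr\<in>?S. pmf ?p tr * ret G i tr * (\<Sum>t<horizon G. dd G \<pi> i (Hi G i t tr) (snd (tr!t) i)))
     = (\<Sum>t<horizon G. \<Sum>tr\<in>?S. pmf ?p tr * ret G i tr * dd G \<pi> i (Hi G i t tr) (snd (tr!t) i))"
    by (simp add: sum_distrib_left sum.swap[of _ ?S])
  also have "\<dots> = (\<Sum>t<horizon G. \<Sum>h\<in>Hi G i t ` ?S. if reached G \<pi> i h then measure_pmf.prob ?p {tr. Hi G i t tr = h} * Vq G \<pi> i h else 0)"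
  proof (intro sum.cong refl)
    fix t assume "t \<in> {..<horizon G}"
    hence tT: "t < horizon G" by simp
    have "(\<Sum>tr\<in>?S. pmf ?p tr * ret G i tr * dd G \<pi> i (Hi G i t tr) (snd (tr!t) i))
      = (\<Sum>h\<in>Hi G i t ` ?S. \<Sum>tr\<in>?S. if Hi G i t tr = h then pmf ?p tr * ret G i tr * dd G \<pi> i h (snd (tr!t) i) else 0)"
      by (subst grp[OF fS, of _ "Hi G i t"]) (intro sum.cong refl, auto)
    also have "\<dots> = (\<Sum>h\<in>Hi G i t ` ?S. if reached G \<pi> i h then measure_pmf.prob ?p {tr. Hi G i t tr = h} * Vq G \<pi> i h else 0)"
    proof (intro sum.cong refl)
      fix h assume "h \<in> Hi G i t ` ?S"
      then obtain tr1 where tr1: "tr1 \<in> ?S" "h = Hi G i t tr1" by auto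
      have tl: "t = length (fst h)" using tr1 tT by (simp add: Hi_len TrS_def)
      show "(\<Sum>tr\<in>?S. if Hi G i t tr = h then pmf ?p tr * ret G i tr * dd G \<pi> i h (snd (tr!t) i) else 0)
        = (if reached G \<pi> i h then measure_pmf.prob ?p {tr. Hi G i t tr = h} * Vq G \<pi> i h else 0)"
      proof (cases "reached G \<pi> i h")
        case True thus ?thesis using term_ident[OF wf vp fm True tl] by simp
      next
        case False thus ?thesis by (simp add: dd_def cong: if_cong)
      qed
    qed
    finally show "(\<Sum>tr\<in>?S. pmf ?p tr * ret G i tr * dd G \<pi> i (Hi G i t tr) (snd (tr!t) i))
      = (\<Sum>h\<in>Hi G i t ` ?S. if reached G \<pi> i h then measure_pmf.prob ?p {tr. Hi G i t tr = h} * Vq G \<pi> i h else 0)" .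
  qed
  finally show ?thesis .
qed

lemma D_nonneg:
  fixes G :: "('s::finite, 'i::finite, 'a, 'o::finite) posg"
  assumes wf: "wf_posg G" and vp: "valid_policy G \<pi>" and fm: "fully_mixed G \<pi>"
  shows "0 \<le> (\<Sum>tr\<in>TrS G (horizon G). pmf (traj G \<pi>) tr * ret G i tr * (\<Sum>t<horizon G. dd G \<pi> i (Hi G i t tr) (snd (tr!t) i)))"
  unfolding Dform[OF wf vp fm]
  by (intro sum_nonneg) (simp add: Vq_nonneg)

lemma D_pos:
  fixes G :: "('s::finite, 'i::finite, 'a, 'o::finite) posg"
  assumes wf: "wf_posg G" and vp: "valid_policy G \<pi>" and fm: "fully_mixed G \<pi>" and re: "reached G \<pi> i h"
    and b1: "b1 \<in> acts G i" and b2: "b2 \<in> acts G i" and ne: "qdp G i \<pi> h b1 \<noteq> qdp G i \<pi> h b2"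
  shows "0 < (\<Sum>tr\<in>TrS G (horizon G). pmf (traj G \<pi>) tr * ret G i tr * (\<Sum>t<horizon G. dd G \<pi> i (Hi G i t tr) (snd (tr!t) i)))"
proof -
  let ?S = "TrS G (horizon G)"
  let ?p = "traj G \<pi>"
  let ?t = "length (fst h)"
  have fS: "finite ?S" using finite_TrS[OF wf] .
  have tT: "?t < horizon G" using re by (simp add: reached_def)
  have Ph: "measure_pmf.prob ?p {tr. Hi G i ?t tr = h} > 0" using re by (simp add: reached_def)
  then obtain tr0 where tr0: "tr0 \<in> set_pmf ?p" "Hi G i ?t tr0 = h" using prob_pos_ex by blast
  have hS: "h \<in> Hi G i ?t ` ?S" using tr0 set_traj[OF vp] by force
  have V: "0 < Vq G \<pi> i h" by (rule Vq_pos[OF wf vp fm re b1 b2 ne])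
  have inner: "0 < (\<Sum>h'\<in>Hi G i ?t ` ?S. if reached G \<pi> i h' then measure_pmf.prob ?p {tr. Hi G i ?t tr = h'} * Vq G \<pi> i h' else 0)"
    using fS hS re Ph V by (intro sum_pos2[where i=h]) (auto simp: Vq_nonneg)
  show ?thesis unfolding Dform[OF wf vp fm]
    using tT inner by (intro sum_pos2[where i="?t"]) (auto intro!: sum_nonneg simp: Vq_nonneg)
qed


lemma swap3:
  fixes a :: "'x \<Rightarrow> real"
  assumes "finite B" "finite C"
  shows "(\<Sum>x\<in>A. a x * (\<Sum>t\<in>B. \<Sum>j\<in>C. f j t x)) = (\<Sum>j\<in>C. \<Sum>x\<in>A. a x * (\<Sum>t\<in>B. f j t x))"
proof -
  have "(\<Sum>t\<in>B. \<Sum>j\<in>C. f j t x) = (\<Sum>j\<in>C. \<Sum>t\<in>B. f j t x)" for x by (rule sum.swap)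
  hence "(\<Sum>x\<in>A. a x * (\<Sum>t\<in>B. \<Sum>j\<in>C. f j t x)) = (\<Sum>x\<in>A. \<Sum>j\<in>C. a x * (\<Sum>t\<in>B. f j t x))"
    by (simp add: sum_distrib_left)
  also have "\<dots> = (\<Sum>j\<in>C. \<Sum>x\<in>A. a x * (\<Sum>t\<in>B. f j t x))" by (rule sum.swap)
  finally show ?thesis .
qed

lemma hedge_eq:
  fixes G :: "('s::finite, 'i::finite, 'a, 'o::finite) posg"
  assumes wf: "wf_posg G" and vp: "valid_policy G \<pi>" and fm: "fully_mixed G \<pi>"
    and hu: "hedge_update G \<eta> \<pi> \<pi>'"
  shows "\<pi>' = PPol G \<pi> \<eta>"
proof (intro ext)
  fix i h
  show "\<pi>' i h = PPol G \<pi> \<eta> i h"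
  proof (cases "reached G \<pi> i h")
    case True
    hence "\<forall>a. pmf (\<pi>' i h) a = pmf (\<pi> i h) a * exp (\<eta> * qdp G i \<pi> h a) /
              (\<Sum>b\<in>acts G i. pmf (\<pi> i h) b * exp (\<eta> * qdp G i \<pi> h b))"
      using hu unfolding hedge_update_def by metis
    thus ?thesis using True
      by (intro pmf_eqI) (simp add: pmf_PPol[OF wf vp fm] rho_def Zf_def)
  next
    case False
    hence "\<pi>' i h = \<pi> i h" using hu unfolding hedge_update_def by metis
    thus ?thesis using False by (simp add: PPol_def)
  qed
qed

lemma PPol_const:
  fixes G :: "('s::finite, 'i::finite, 'a, 'o::finite) posg"
  assumes wf: "wf_posg G" and vp: "valid_policy G \<pi>" and fm: "fully_mixed G \<pi>"
    and nc: "\<forall>j h. reached G \<pi> j h \<longrightarrow> (\<forall>b1\<in>acts G j. \<forall>b2\<in>acts G j. qdp G j \<pi> h b1 = qdp G j \<pi> h b2)"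
  shows "PPol G \<pi> \<eta> = \<pi>"
proof (intro ext pmf_eqI)
  fix i h b
  show "pmf (PPol G \<pi> \<eta> i h) b = pmf (\<pi> i h) b"
  proof (cases "reached G \<pi> i h \<and> b \<in> acts G i")
    case True
    hence eq: "qdp G i \<pi> h b' = qdp G i \<pi> h b" if "b' \<in> acts G i" for b' using nc that by blast
    have "Zf G \<pi> \<eta> i h = (\<Sum>b'\<in>acts G i. pmf (\<pi> i h) b' * exp (\<eta> * qdp G i \<pi> h b))"
      unfolding Zf_def by (intro sum.cong refl) (simp add: eq)
    also have "\<dots> = exp (\<eta> * qdp G i \<pi> h b)" by (simp add: sum_distrib_right[symmetric] sum_acts[OF wf vp])
    finally show ?thesis using True by (simp add: pmf_PPol[OF wf vp fm] rho_def)
  next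
    case False thus ?thesis by (auto simp: pmf_PPol[OF wf vp fm] rho_def pmf_out[OF vp])
  qed
qed

theorem theorem1:
  fixes G :: "('s::finite, 'i::finite, 'a, 'o::finite) posg"
    and \<pi> :: "('i, 'o, 'a) policy"
  assumes "wf_posg G"
    and "common_payoff G"
    and "valid_policy G \<pi>"
    and "fully_mixed G \<pi>"
  shows "\<exists>\<eta>0>0. \<forall>\<eta> \<pi>'. 0 < \<eta> \<and> \<eta> < \<eta>0 \<and> hedge_update G \<eta> \<pi> \<pi>' \<longrightarrow>
           (\<forall>i. J G i \<pi>' \<ge> J G i \<pi>) \<and> (\<pi>' \<noteq> \<pi> \<longrightarrow> (\<forall>i. J G i \<pi>' > J G i \<pi>))"
proof -
  note wf = assms(1) and cp = assms(2) and vp = assms(3) and fm = assms(4)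
  define PP where "PP = PPol G \<pi>"
  have pmfPP: "pmf (PP \<eta> i h) b = pmf (\<pi> i h) b * rho G \<pi> \<eta> i h b" for \<eta> i h b
    unfolding PP_def by (rule pmf_PPol[OF wf vp fm])
  have vPP: "valid_policy G (PP \<eta>)" for \<eta> unfolding PP_def by (rule valid_PPol[OF wf vp fm])
  have r0: "rho G \<pi> 0 i h b = 1" for i h b by (rule rho0[OF wf vp])
  have dr: "((\<lambda>\<eta>. rho G \<pi> \<eta> i h b) has_real_derivative dd G \<pi> i h b) (at 0)" for i h b by (rule drho[OF wf vp])
  have PP0: "PP 0 = \<pi>" by (intro ext pmf_eqI) (simp add: pmfPP r0)
  have cpJ: "J G k \<sigma> = J G j \<sigma>" if "valid_policy G \<sigma>" for k j \<sigma>
    using cp that unfolding common_payoff_def by blast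
  define Dk where "Dk k j = (\<Sum>tr\<in>TrS G (horizon G). pmf (traj G \<pi>) tr * ret G k tr *
      (\<Sum>t<horizon G. dd G \<pi> j (Hi G j t tr) (snd (tr!t) j)))" for k j
  have dfull: "((\<lambda>\<eta>. J G k (PP \<eta>)) has_real_derivative (\<Sum>j\<in>UNIV. Dk k j)) (at 0)" for k
  proof -
    have "((\<lambda>\<eta>. J G k (PP \<eta>)) has_real_derivative (\<Sum>tr\<in>TrS G (horizon G). pmf (traj G \<pi>) tr * ret G k tr *
        (\<Sum>t<horizon G. \<Sum>j\<in>UNIV. dd G \<pi> j (Hi G j t tr) (snd (tr!t) j)))) (at 0)"
      by (rule deriv_J[OF wf vPP pmfPP r0 dr])
    moreover have "(\<Sum>tr\<in>TrS G (horizon G). pmf (traj G \<pi>) tr * ret G k tr *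
        (\<Sum>t<horizon G. \<Sum>j\<in>UNIV. dd G \<pi> j (Hi G j t tr) (snd (tr!t) j))) = (\<Sum>j\<in>UNIV. Dk k j)"
      unfolding Dk_def by (rule swap3) auto
    ultimately show ?thesis by simp
  qed
  have Dkj: "Dk k j = Dk j j" for k j
  proof -
    define P1 where "P1 \<eta> = (\<lambda>i h. if i = j then PP \<eta> i h else \<pi> i h)" for \<eta>
    have pmfP1: "pmf (P1 \<eta> i h) b = pmf (\<pi> i h) b * (if i = j then rho G \<pi> \<eta> i h b else 1)" for \<eta> i h b
      by (simp add: P1_def pmfPP)
    have vP1: "valid_policy G (P1 \<eta>)" for \<eta>
      using vPP[of \<eta>] vp by (simp add: P1_def valid_policy_def)
    have r0': "(if i = j then rho G \<pi> 0 i h b else 1) = 1" for i h b by (simp add: r0)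
    have dr': "((\<lambda>\<eta>. if i = j then rho G \<pi> \<eta> i h b else 1) has_real_derivative (if i = j then dd G \<pi> i h b else 0)) (at 0)" for i h b
      by (cases "i = j") (simp_all add: dr DERIV_const)
    have d1: "((\<lambda>\<eta>. J G k' (P1 \<eta>)) has_real_derivative Dk k' j) (at 0)" for k'
    proof -
      have "((\<lambda>\<eta>. J G k' (P1 \<eta>)) has_real_derivative (\<Sum>tr\<in>TrS G (horizon G). pmf (traj G \<pi>) tr * ret G k' tr *
        (\<Sum>t<horizon G. \<Sum>i\<in>UNIV. (if i = j then dd G \<pi> i (Hi G i t tr) (snd (tr!t) i) else 0)))) (at 0)"
        by (rule deriv_J[OF wf vP1 pmfP1 r0' dr'])
      thus ?thesis unfolding Dk_def by simp
    qed
    have "(\<lambda>\<eta>. J G k (P1 \<eta>)) = (\<lambda>\<eta>. J G j (P1 \<eta>))" using cpJ[OF vP1] by auto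
    thus ?thesis using d1[of k] d1[of j] DERIV_unique by metis
  qed
  have dfull': "((\<lambda>\<eta>. J G k (PP \<eta>)) has_real_derivative (\<Sum>j\<in>UNIV. Dk j j)) (at 0)" for k
    using dfull[of k] by (simp add: Dkj[of k])
  show ?thesis
  proof (cases "\<exists>j h. reached G \<pi> j h \<and> (\<exists>b1\<in>acts G j. \<exists>b2\<in>acts G j. qdp G j \<pi> h b1 \<noteq> qdp G j \<pi> h b2)")
    case True
    then obtain j0 h0 b1 b2 where w: "reached G \<pi> j0 h0" "b1 \<in> acts G j0" "b2 \<in> acts G j0" "qdp G j0 \<pi> h0 b1 \<noteq> qdp G j0 \<pi> h0 b2"
      by blast
    have Lpos: "0 < (\<Sum>j\<in>UNIV. Dk j j)"
      using D_pos[OF wf vp fm w] D_nonneg[OF wf vp fm] unfolding Dk_def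
      by (intro sum_pos2[where i=j0]) auto
    obtain d where d: "d > 0" "\<forall>h>0. h < d \<longrightarrow> J G j0 (PP 0) < J G j0 (PP (0 + h))"
      using DERIV_pos_inc_right[OF dfull'[of j0] Lpos] by blast
    show ?thesis
    proof (intro exI[of _ d] conjI allI impI d(1))
      fix \<eta> \<pi>' assume a: "0 < \<eta> \<and> \<eta> < d \<and> hedge_update G \<eta> \<pi> \<pi>'"
      have pe: "\<pi>' = PP \<eta>" using hedge_eq[OF wf vp fm] a unfolding PP_def by blast
      have lt: "J G j0 \<pi> < J G j0 \<pi>'" using d(2) a pe PP0 by auto
      have lt': "J G i \<pi> < J G i \<pi>'" for i
        using lt cpJ[OF vp, of i j0] cpJ[OF vPP[of \<eta>], of i j0] pe by simp
      show "J G i \<pi> \<le> J G i \<pi>'" for i using lt'[of i] by simp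
      show "J G i \<pi> < J G i \<pi>'" for i using lt'[of i] .
    qed
  next
    case False
    hence nc: "\<forall>j h. reached G \<pi> j h \<longrightarrow> (\<forall>b1\<in>acts G j. \<forall>b2\<in>acts G j. qdp G j \<pi> h b1 = qdp G j \<pi> h b2)"
      by blast
    show ?thesis
    proof (intro exI[of _ "1::real"] conjI allI impI)
      fix \<eta> \<pi>' assume a: "0 < \<eta> \<and> \<eta> < 1 \<and> hedge_update G \<eta> \<pi> \<pi>'"
      have pe: "\<pi>' = \<pi>" using hedge_eq[OF wf vp fm] PPol_const[OF wf vp fm nc] a by metis
      show "J G i \<pi> \<le> J G i \<pi>'" for i using pe by simp
      show "J G i \<pi> < J G i \<pi>'" if "\<pi>' \<noteq> \<pi>" for i using that pe by simp
    qed simp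
  qed
qed

end
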